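(* Let $\mathcal{H}$ be a separable infinite-dimensional complex Hilbert space, $T$ a bounded linear operator on $\mathcal{H}$, and $k\ge 1$ an integer. Then $T$ is a completely non-unitary contraction with $\mathcal{D}_T\subseteq\mathcal{D}_{T^*}$, $\dim\mathcal{D}_T=1$ and $\dim\mathcal{D}_{T^*}=k+1$ if and only if there exists an orthonormal basis $\{e_n\}_{n\geq 0}$ of $\mathcal{H}$ with respect to which $T=S_k+F$, where $S_ke_n=e_{n+k}$ ($n\ge0$) is the unilateral shift of multiplicity $k$ and $F$ is an operator of rank at most one given by $$F(e_0)=\alpha_0e_0+\alpha_1e_1+\cdots+\alpha_{k-1}e_{k-1}+(\alpha_k-1)e_k,\qquad F(e_n)=0\ \ (n\geq 1),$$ for some $\alpha_0,\dots,\alpha_k\in\mathbb{C}$ with $\sum_{i=0}^{k}|\alpha_i|^2<1$.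
   Context: For a contraction $T$ on $\mathcal{H}$, $\mathcal{D}_T=\overline{(I-T^*T)^{1/2}\mathcal{H}}$ and $\mathcal{D}_{T^*}=\overline{(I-TT^* )^{1/2}\mathcal{H}}$. A contraction is completely non-unitary if it has no nonzero reducing subspace on which it is unitary. *)

theory Defs
  imports "HOL-Analysis.Analysis"
begin

text \<open>HOL-Analysis has no complex inner-product spaces, so we introduce the class of
complex Hilbert spaces: a real Banach space with a compatible complex scalar
multiplication and a complex inner product (linear in the first argument,
conjugate-linear in the second) inducing the norm.\<close>

class chilbert = banach +
  fixes scaleC :: "complex \<Rightarrow> 'a \<Rightarrow> 'a"
    and cinner :: "'a \<Rightarrow> 'a \<Rightarrow> complex"
  assumes scaleC_of_real: "scaleC (complex_of_real r) x = scaleR r x"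
    and scaleC_add_right: "scaleC c (x + y) = scaleC c x + scaleC c y"
    and scaleC_add_left: "scaleC (c + d) x = scaleC c x + scaleC d x"
    and scaleC_scaleC: "scaleC c (scaleC d x) = scaleC (c * d) x"
    and scaleC_one: "scaleC 1 x = x"
    and cinner_add_left: "cinner (x + y) z = cinner x z + cinner y z"
    and cinner_scaleC_left: "cinner (scaleC c x) y = c * cinner x y"
    and cinner_commute: "cinner y x = cnj (cinner x y)"
    and cinner_self_norm: "cinner x x = complex_of_real ((norm x)\<^sup>2)"

definition clinear_op :: "('a::chilbert \<Rightarrow> 'a) \<Rightarrow> bool" where
  "clinear_op T \<longleftrightarrow> (\<forall>x y. T (x + y) = T x + T y) \<and> (\<forall>c x. T (scaleC c x) = scaleC c (T x))"

definition bounded_op :: "('a::chilbert \<Rightarrow> 'a) \<Rightarrow> bool" where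
  "bounded_op T \<longleftrightarrow> clinear_op T \<and> (\<exists>K. \<forall>x. norm (T x) \<le> K * norm x)"

text \<open>Hilbert-space adjoint (exists uniquely for bounded operators by Riesz).\<close>
definition adj :: "('a::chilbert \<Rightarrow> 'a) \<Rightarrow> ('a \<Rightarrow> 'a)" where
  "adj T = (THE S. \<forall>x y. cinner (T x) y = cinner x (S y))"

definition contraction :: "('a::chilbert \<Rightarrow> 'a) \<Rightarrow> bool" where
  "contraction T \<longleftrightarrow> bounded_op T \<and> (\<forall>x. norm (T x) \<le> norm x)"

definition positive_op :: "('a::chilbert \<Rightarrow> 'a) \<Rightarrow> bool" where
  "positive_op A \<longleftrightarrow> bounded_op A \<and> (\<forall>x. cinner (A x) x \<in> \<real> \<and> 0 \<le> Re (cinner (A x) x))"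

definition op_sqrt :: "('a::chilbert \<Rightarrow> 'a) \<Rightarrow> ('a \<Rightarrow> 'a)" where
  "op_sqrt A = (THE R. positive_op R \<and> R \<circ> R = A)"

definition defect_space :: "('a::chilbert \<Rightarrow> 'a) \<Rightarrow> 'a set" where
  "defect_space T = closure (range (op_sqrt (\<lambda>x. x - adj T (T x))))"

definition defect_space_adj :: "('a::chilbert \<Rightarrow> 'a) \<Rightarrow> 'a set" where
  "defect_space_adj T = closure (range (op_sqrt (\<lambda>x. x - T (adj T x))))"

definition csubspace :: "'a::chilbert set \<Rightarrow> bool" where
  "csubspace M \<longleftrightarrow> 0 \<in> M \<and> (\<forall>x\<in>M. \<forall>y\<in>M. x + y \<in> M) \<and> (\<forall>c. \<forall>x\<in>M. scaleC c x \<in> M)"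

definition cspan :: "'a::chilbert set \<Rightarrow> 'a set" where
  "cspan S = {x. \<exists>B c. finite B \<and> B \<subseteq> S \<and> x = (\<Sum>b\<in>B. scaleC (c b) b)}"

definition cindependent :: "'a::chilbert set \<Rightarrow> bool" where
  "cindependent S \<longleftrightarrow> (\<forall>B c. finite B \<and> B \<subseteq> S \<and> (\<Sum>b\<in>B. scaleC (c b) b) = 0 \<longrightarrow> (\<forall>b\<in>B. c b = 0))"

definition has_cdim :: "'a::chilbert set \<Rightarrow> nat \<Rightarrow> bool" where
  "has_cdim V n \<longleftrightarrow> (\<exists>B. finite B \<and> card B = n \<and> B \<subseteq> V \<and> cindependent B \<and> cspan B = V)"

definition separable_hilbert :: "'a::chilbert itself \<Rightarrow> bool" where
  "separable_hilbert _ \<longleftrightarrow> (\<exists>D::'a set. countable D \<and> closure D = UNIV)"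

definition infinite_dimensional :: "'a::chilbert itself \<Rightarrow> bool" where
  "infinite_dimensional _ \<longleftrightarrow> \<not> (\<exists>B::'a set. finite B \<and> cspan B = UNIV)"

definition reducing_subspace :: "('a::chilbert \<Rightarrow> 'a) \<Rightarrow> 'a set \<Rightarrow> bool" where
  "reducing_subspace T M \<longleftrightarrow> csubspace M \<and> closed M \<and> T ` M \<subseteq> M \<and> adj T ` M \<subseteq> M"

definition unitary_on :: "('a::chilbert \<Rightarrow> 'a) \<Rightarrow> 'a set \<Rightarrow> bool" where
  "unitary_on T M \<longleftrightarrow> (\<forall>x\<in>M. norm (T x) = norm x) \<and> T ` M = M"

definition completely_non_unitary :: "('a::chilbert \<Rightarrow> 'a) \<Rightarrow> bool" where
  "completely_non_unitary T \<longleftrightarrow>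
     contraction T \<and> \<not> (\<exists>M. reducing_subspace T M \<and> M \<noteq> {0} \<and> unitary_on T M)"

definition orthonormal_basis_nat :: "(nat \<Rightarrow> 'a::chilbert) \<Rightarrow> bool" where
  "orthonormal_basis_nat e \<longleftrightarrow>
     (\<forall>m n. cinner (e m) (e n) = (if m = n then 1 else 0)) \<and> closure (cspan (range e)) = UNIV"

end

theory Submission
  imports Defs "HOL-Computational_Algebra.Formal_Power_Series"
begin

section \<open>Basic algebra of chilbert\<close>

lemma scaleC_zero_right[simp]: "scaleC c (0::'a::chilbert) = 0"
proof -
  have "scaleC c (0::'a) = scaleC c 0 + scaleC c 0" by (metis add.right_neutral scaleC_add_right)
  then show ?thesis by simp
qed

lemma scaleC_zero_left[simp]: "scaleC 0 (x::'a::chilbert) = 0"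
proof -
  have "scaleC 0 x = scaleC 0 x + scaleC 0 x" by (metis add.right_neutral scaleC_add_left)
  then show ?thesis by simp
qed

lemma scaleC_minus_right: "scaleC c (- x::'a::chilbert) = - scaleC c x"
  by (metis add_eq_0_iff2 add.right_inverse scaleC_add_right scaleC_zero_right)

lemma scaleC_diff_right: "scaleC c (x - y::'a::chilbert) = scaleC c x - scaleC c y"
  by (metis diff_conv_add_uminus scaleC_add_right scaleC_minus_right)

lemma scaleC_minus_left: "scaleC (- c) (x::'a::chilbert) = - scaleC c x"
  by (metis add_eq_0_iff2 add.right_inverse scaleC_add_left scaleC_zero_left)

lemma scaleC_diff_left: "scaleC (c - d) (x::'a::chilbert) = scaleC c x - scaleC d x"
  by (metis diff_conv_add_uminus scaleC_add_left scaleC_minus_left)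

lemma scaleC_scaleR: "scaleC c (scaleR r x) = scaleR r (scaleC c (x::'a::chilbert))"
  by (metis mult.commute scaleC_of_real scaleC_scaleC)

lemma scaleC_sum_right: "scaleC c (sum f A) = (\<Sum>a\<in>A. scaleC c (f a :: 'a::chilbert))"
  by (induction A rule: infinite_finite_induct) (auto simp: scaleC_add_right)

lemma scaleC_sum_left: "scaleC (sum f A) (x::'a::chilbert) = (\<Sum>a\<in>A. scaleC (f a) x)"
  by (induction A rule: infinite_finite_induct) (auto simp: scaleC_add_left)

global_interpretation cvs: vector_space "scaleC :: complex \<Rightarrow> 'a \<Rightarrow> 'a::chilbert"
  by unfold_locales (auto simp: scaleC_add_right scaleC_add_left scaleC_scaleC scaleC_one)

lemma cinner_add_right: "cinner x (y + z) = cinner x y + cinner x (z::'a::chilbert)"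
  by (metis cinner_add_left cinner_commute complex_cnj_add)

lemma cinner_scaleC_right: "cinner x (scaleC c y) = cnj c * cinner x (y::'a::chilbert)"
  by (metis cinner_commute cinner_scaleC_left complex_cnj_cnj complex_cnj_mult)

lemma cinner_zero_left[simp]: "cinner 0 (x::'a::chilbert) = 0"
  by (metis add_cancel_right_right cinner_add_left add_0)

lemma cinner_zero_right[simp]: "cinner x (0::'a::chilbert) = 0"
  by (metis cinner_commute cinner_zero_left complex_cnj_zero)

lemma cinner_minus_left: "cinner (- x) (y::'a::chilbert) = - cinner x y"
  by (metis add_eq_0_iff2 add.right_inverse cinner_add_left cinner_zero_left)

lemma cinner_minus_right: "cinner x (- y::'a::chilbert) = - cinner x y"
  by (metis add_eq_0_iff2 add.right_inverse cinner_add_right cinner_zero_right)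

lemma cinner_diff_left: "cinner (x - y) (z::'a::chilbert) = cinner x z - cinner y z"
  using cinner_add_left[of x "-y" z] by (simp add: cinner_minus_left)

lemma cinner_diff_right: "cinner x (y - z::'a::chilbert) = cinner x y - cinner x z"
  using cinner_add_right[of x y "-z"] by (simp add: cinner_minus_right)

lemma cinner_sum_left: "cinner (sum f A) (y::'a::chilbert) = (\<Sum>a\<in>A. cinner (f a) y)"
  by (induction A rule: infinite_finite_induct) (auto simp: cinner_add_left)

lemma cinner_sum_right: "cinner y (sum f A) = (\<Sum>a\<in>A. cinner y (f a :: 'a::chilbert))"
  by (induction A rule: infinite_finite_induct) (auto simp: cinner_add_right)

lemma cinner_scaleR_left: "cinner (scaleR r x) (y::'a::chilbert) = of_real r * cinner x y"
  by (metis cinner_scaleC_left scaleC_of_real)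

lemma cinner_scaleR_right: "cinner x (scaleR r y) = of_real r * cinner x (y::'a::chilbert)"
  by (metis cinner_scaleC_right scaleC_of_real complex_cnj_complex_of_real)

lemmas cinner_simps = cinner_add_left cinner_add_right cinner_scaleC_left cinner_scaleC_right
  cinner_diff_left cinner_diff_right cinner_minus_left cinner_minus_right
  cinner_sum_left cinner_sum_right cinner_scaleR_left cinner_scaleR_right

lemma cinner_self_real: "cinner x (x::'a::chilbert) = of_real (norm x ^ 2)"
  by (rule cinner_self_norm)

lemma cinner_self_eq_zero[simp]: "cinner x x = 0 \<longleftrightarrow> (x::'a::chilbert) = 0"
  by (simp add: cinner_self_norm)

lemma norm_sq_cinner: "(norm (x::'a::chilbert))^2 = Re (cinner x x)"
  by (simp add: cinner_self_norm)

lemma cnj_cinner_self[simp]: "cnj (cinner x (x::'a::chilbert)) = cinner x x"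
  by (simp add: cinner_self_norm)

lemma norm_scaleC: "norm (scaleC c x) = cmod c * norm (x::'a::chilbert)"
proof -
  have "complex_of_real ((norm (scaleC c x))^2) = cinner (scaleC c x) (scaleC c x)"
    by (simp add: cinner_self_norm)
  also have "\<dots> = (c * cnj c) * cinner x x" by (simp add: cinner_simps mult.assoc)
  also have "\<dots> = complex_of_real ((cmod c)^2 * (norm x)^2)"
    by (simp only: complex_norm_square[symmetric] cinner_self_norm[of x] of_real_mult)
  finally have "(norm (scaleC c x))^2 = (cmod c * norm x)^2"
    by (simp only: of_real_eq_iff power_mult_distrib)
  then show ?thesis by (simp add: power2_eq_iff_nonneg)
qed

lemma cinner_cauchy_schwarz: "cmod (cinner x y) \<le> norm x * norm (y::'a::chilbert)"
proof (cases "y = 0")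
  case True then show ?thesis by simp
next
  case False
  define t where "t = cinner x y / cinner y y"
  have yy: "cinner y y = of_real ((norm y)^2)" by (rule cinner_self_norm)
  have ny: "norm y > 0" using False by simp
  have "0 \<le> Re (cinner (x - scaleC t y) (x - scaleC t y))"
    by (simp add: cinner_self_norm)
  also have "cinner (x - scaleC t y) (x - scaleC t y) = cinner x x - cnj t * cinner x y - t * cinner y x + t * cnj t * cinner y y"
    by (simp add: cinner_simps algebra_simps)
  also have "\<dots> = cinner x x - cinner x y * cnj (cinner x y) / cinner y y"
    using False by (simp add: t_def cinner_commute[of x y] yy field_simps)
  also have "\<dots> = complex_of_real ((norm x)^2 - (cmod (cinner x y))^2 / (norm y)^2)"
    by (simp only: complex_norm_square[symmetric] yy cinner_self_norm[of x] of_real_diff of_real_divide)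
  finally have "0 \<le> (norm x)^2 - (cmod (cinner x y))^2 / (norm y)^2"
    by (simp only: Re_complex_of_real)
  then have "(cmod (cinner x y))^2 \<le> (norm x * norm y)^2"
    using ny by (simp add: field_simps power_mult_distrib)
  then show ?thesis by (rule power2_le_imp_le) simp
qed

lemma bounded_bilinear_cinner: "bounded_bilinear (cinner :: 'a::chilbert \<Rightarrow> 'a \<Rightarrow> complex)"
proof
  fix a a' b b' :: 'a and r :: real
  show "cinner (a + a') b = cinner a b + cinner a' b" by (rule cinner_add_left)
  show "cinner a (b + b') = cinner a b + cinner a b'" by (rule cinner_add_right)
  show "cinner (r *\<^sub>R a) b = r *\<^sub>R cinner a b" by (simp add: cinner_scaleR_left scaleR_conv_of_real)
  show "cinner a (r *\<^sub>R b) = r *\<^sub>R cinner a b" by (simp add: cinner_scaleR_right scaleR_conv_of_real)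
next
  show "\<exists>K. \<forall>a b::'a. norm (cinner a b) \<le> norm a * norm b * K"
    by (rule exI[of _ 1]) (simp add: cinner_cauchy_schwarz)
qed

lemmas tendsto_cinner[tendsto_intros] = bounded_bilinear.tendsto[OF bounded_bilinear_cinner]
lemmas continuous_on_cinner[continuous_intros] = bounded_bilinear.continuous_on[OF bounded_bilinear_cinner]
lemmas continuous_cinner[continuous_intros] = bounded_bilinear.continuous[OF bounded_bilinear_cinner]

lemma bounded_linear_scaleC: "bounded_linear (scaleC c :: 'a::chilbert \<Rightarrow> 'a)"
proof
  fix x y :: 'a and r :: real
  show "scaleC c (x + y) = scaleC c x + scaleC c y" by (rule scaleC_add_right)
  show "scaleC c (r *\<^sub>R x) = r *\<^sub>R scaleC c x" by (rule scaleC_scaleR)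
  show "\<exists>K. \<forall>x::'a. norm (scaleC c x) \<le> norm x * K"
    by (rule exI[of _ "cmod c"]) (simp add: norm_scaleC)
qed

lemma continuous_on_scaleC[continuous_intros]:
  "continuous_on S f \<Longrightarrow> continuous_on S (\<lambda>x. scaleC c (f x :: 'a::chilbert))"
  by (rule bounded_linear.continuous_on[OF bounded_linear_scaleC])

lemma tendsto_scaleC[tendsto_intros]:
  "(f \<longlongrightarrow> l) F \<Longrightarrow> ((\<lambda>x. scaleC c (f x :: 'a::chilbert)) \<longlongrightarrow> scaleC c l) F"
  by (rule bounded_linear.tendsto[OF bounded_linear_scaleC])

lemma cinner_eq_zero_all: "(\<And>y. cinner x y = 0) \<Longrightarrow> (x::'a::chilbert) = 0"
  using cinner_self_eq_zero by blast

lemma cinner_ext: "(\<And>y. cinner x y = cinner x' y) \<Longrightarrow> (x::'a::chilbert) = x'"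
  by (rule eq_iff_diff_eq_0[THEN iffD2], rule cinner_eq_zero_all) (simp add: cinner_diff_left)

lemma cinner_ext_right: "(\<And>y. cinner y x = cinner y x') \<Longrightarrow> (x::'a::chilbert) = x'"
  by (rule cinner_ext) (metis cinner_commute)

lemma norm_sq_add: "(norm (x + y::'a::chilbert))^2 = (norm x)^2 + (norm y)^2 + 2 * Re (cinner x y)"
proof -
  have "cinner (x+y) (x+y) = cinner x x + cinner y y + (cinner x y + cnj (cinner x y))"
    by (simp add: cinner_simps cinner_commute[of y x])
  then have "Re (cinner (x+y) (x+y)) = Re (cinner x x) + Re (cinner y y) + 2 * Re (cinner x y)"
    by simp
  then show ?thesis by (simp add: norm_sq_cinner)
qed

lemma pythagoras: "cinner x y = 0 \<Longrightarrow> (norm (x + y::'a::chilbert))^2 = (norm x)^2 + (norm y)^2"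
  by (simp add: norm_sq_add)

section \<open>Operators\<close>

lemma clinear_opD:
  assumes "clinear_op T"
  shows "T (x + y) = T x + T y" "T (scaleC c x) = scaleC c (T x)"
  using assms unfolding clinear_op_def by auto

lemma bounded_op_linear: "bounded_op T \<Longrightarrow> bounded_linear T"
  unfolding bounded_op_def clinear_op_def
proof (elim conjE exE, intro bounded_linear_intro)
  fix K assume a: "\<forall>x y. T (x + y) = T x + T y" and s: "\<forall>c x. T (scaleC c x) = scaleC c (T x)"
    and K: "\<forall>x. norm (T x) \<le> K * norm x"
  fix x y :: 'a and r :: real
  show "T (x + y) = T x + T y" using a by auto
  show "T (r *\<^sub>R x) = r *\<^sub>R T x" using s by (metis scaleC_of_real)
  show "norm (T x) \<le> norm x * K" using K by (simp add: mult.commute)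
qed

lemma bounded_op_cvs_linear: "bounded_op T \<Longrightarrow> Vector_Spaces.linear scaleC scaleC T"
  unfolding bounded_op_def clinear_op_def
  by (unfold_locales) (auto simp: scaleC_add_right scaleC_add_left scaleC_scaleC scaleC_one)

lemma bounded_op_add: "bounded_op T \<Longrightarrow> T (x + y) = T x + T y"
  and bounded_op_scaleC: "bounded_op T \<Longrightarrow> T (scaleC c x) = scaleC c (T x)"
  unfolding bounded_op_def clinear_op_def by auto

lemma bounded_op_zero: "bounded_op T \<Longrightarrow> T 0 = 0"
proof -
  assume T: "bounded_op T"
  have "T 0 = T 0 + T 0" by (metis add_0 bounded_op_add[OF T])
  then show ?thesis by simp
qed

lemma bounded_op_diff: "bounded_op T \<Longrightarrow> T (x - y) = T x - T y"
  by (metis bounded_op_add diff_add_cancel eq_diff_eq)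

lemma bounded_op_minus: "bounded_op T \<Longrightarrow> T (- x) = - T x"
  by (metis bounded_op_diff bounded_op_zero diff_0)

lemma bounded_op_sum: "bounded_op T \<Longrightarrow> T (sum f A) = (\<Sum>a\<in>A. T (f a))"
  by (induction A rule: infinite_finite_induct) (auto simp: bounded_op_zero bounded_op_add)

lemma bounded_op_continuous: "bounded_op T \<Longrightarrow> continuous_on S T"
  by (rule linear_continuous_on[OF bounded_op_linear])

lemma bounded_op_tendsto: "bounded_op T \<Longrightarrow> (f \<longlongrightarrow> l) F \<Longrightarrow> ((\<lambda>x. T (f x)) \<longlongrightarrow> T l) F"
  by (rule bounded_linear.tendsto[OF bounded_op_linear])

lemma bounded_opI:
  assumes "\<And>x y. T (x + y) = T x + T y" "\<And>c x. T (scaleC c x) = scaleC c (T x)"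
    "\<And>x. norm (T x) \<le> K * norm x"
  shows "bounded_op T"
  using assms unfolding bounded_op_def clinear_op_def by blast

lemma bounded_op_comp: "bounded_op S \<Longrightarrow> bounded_op T \<Longrightarrow> bounded_op (\<lambda>x. S (T x))"
proof -
  assume S: "bounded_op S" and T: "bounded_op T"
  obtain K1 where K1': "\<And>x. norm (S x) \<le> norm x * K1" "K1 > 0"
    using bounded_linear.pos_bounded[OF bounded_op_linear[OF S]] by blast
  then have K1: "\<And>x. norm (S x) \<le> K1 * norm x" "K1 \<ge> 0" by (auto simp: mult.commute)
  obtain K2 where K2: "\<And>x. norm (T x) \<le> K2 * norm x"
    using T unfolding bounded_op_def by blast
  show ?thesis
  proof (rule bounded_opI[of _ "K1 * K2"])
    fix x y :: 'a and c
    show "S (T (x + y)) = S (T x) + S (T y)" using S T by (simp add: bounded_op_add)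
    show "S (T (scaleC c x)) = scaleC c (S (T x))" using S T by (simp add: bounded_op_scaleC)
    have "norm (S (T x)) \<le> K1 * norm (T x)" by (rule K1)
    also have "\<dots> \<le> K1 * (K2 * norm x)" by (rule mult_left_mono[OF K2 K1(2)])
    finally show "norm (S (T x)) \<le> K1 * K2 * norm x" by (simp add: mult.assoc)
  qed
qed

lemma bounded_op_id: "bounded_op (\<lambda>x. x)"
  by (rule bounded_opI[of _ 1]) auto

lemma bounded_op_minus_fun: "bounded_op S \<Longrightarrow> bounded_op T \<Longrightarrow> bounded_op (\<lambda>x. S x - T x)"
proof -
  assume S: "bounded_op S" and T: "bounded_op T"
  obtain K1 where K1: "\<And>x. norm (S x) \<le> K1 * norm x" using S unfolding bounded_op_def by blast
  obtain K2 where K2: "\<And>x. norm (T x) \<le> K2 * norm x" using T unfolding bounded_op_def by blast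
  show ?thesis
  proof (rule bounded_opI[of _ "K1 + K2"])
    fix x y :: 'a and c
    show "S (x + y) - T (x + y) = S x - T x + (S y - T y)" using S T by (simp add: bounded_op_add)
    show "S (scaleC c x) - T (scaleC c x) = scaleC c (S x - T x)" using S T by (simp add: bounded_op_scaleC scaleC_diff_right)
    have "norm (S x - T x) \<le> norm (S x) + norm (T x)" by (rule norm_triangle_ineq4)
    also have "\<dots> \<le> K1 * norm x + K2 * norm x" using K1 K2 by (rule add_mono)
    finally show "norm (S x - T x) \<le> (K1 + K2) * norm x" by (simp add: algebra_simps)
  qed
qed

lemma bounded_op_funpow: "bounded_op T \<Longrightarrow> bounded_op (T ^^ n)"
proof (induction n)
  case 0 then show ?case using bounded_op_id by (simp add: id_def)
next
  case (Suc n) then show ?case using bounded_op_comp[of T "T^^n"] by (simp add: comp_def)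
qed

definition perp :: "'a::chilbert set \<Rightarrow> 'a set" where
  "perp M = {x. \<forall>y\<in>M. cinner x y = 0}"

lemma perpI: "(\<And>y. y \<in> M \<Longrightarrow> cinner x y = 0) \<Longrightarrow> x \<in> perp M"
  by (simp add: perp_def)

lemma perpD: "x \<in> perp M \<Longrightarrow> y \<in> M \<Longrightarrow> cinner x y = 0"
  by (simp add: perp_def)

lemma perpD': "x \<in> perp M \<Longrightarrow> y \<in> M \<Longrightarrow> cinner y x = 0"
  by (metis perpD cinner_commute complex_cnj_zero)

lemma csubspace_iff: "csubspace M \<longleftrightarrow> cvs.subspace M"
  unfolding csubspace_def cvs.subspace_def by auto

lemma cspan_eq: "cspan S = cvs.span S"
  unfolding cspan_def cvs.span_explicit by auto

lemma cindependent_iff: "cindependent S \<longleftrightarrow> cvs.independent S"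
  unfolding cindependent_def cvs.dependent_explicit by blast

lemma csubspace_perp: "csubspace (perp M)"
  unfolding csubspace_def perp_def by (auto simp: cinner_simps)

lemma closed_perp: "closed (perp M)"
proof -
  have "perp M = (\<Inter>y\<in>M. {x. cinner x y = 0})" unfolding perp_def by auto
  moreover have "closed {x. cinner x y = 0}" for y :: 'a
    by (rule closed_Collect_eq) (intro continuous_intros)+
  ultimately show ?thesis by auto
qed

lemma csubspace_closure:
  assumes "csubspace M" shows "csubspace (closure M)"
  unfolding csubspace_def
proof (intro conjI ballI allI)
  show "0 \<in> closure M" using assms closure_subset unfolding csubspace_def by blast
next
  fix x y assume "x \<in> closure M" "y \<in> closure M"
  then obtain f g where f: "\<forall>n. f n \<in> M" "f \<longlonglongrightarrow> x" and g: "\<forall>n. g n \<in> M" "g \<longlonglongrightarrow> y"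
    unfolding closure_sequential by blast
  have "(\<lambda>n. f n + g n) \<longlonglongrightarrow> x + y" by (intro tendsto_intros f g)
  moreover have "\<forall>n. f n + g n \<in> M" using f g assms unfolding csubspace_def by blast
  ultimately show "x + y \<in> closure M" unfolding closure_sequential by (intro exI[of _ "\<lambda>n. f n + g n"]) auto
next
  fix c x assume "x \<in> closure M"
  then obtain f where f: "\<forall>n. f n \<in> M" "f \<longlonglongrightarrow> x"
    unfolding closure_sequential by blast
  have "(\<lambda>n. scaleC c (f n)) \<longlonglongrightarrow> scaleC c x" by (intro tendsto_intros f)
  moreover have "\<forall>n. scaleC c (f n) \<in> M" using f assms unfolding csubspace_def by blast
  ultimately show "scaleC c x \<in> closure M" unfolding closure_sequential by (intro exI[of _ "\<lambda>n. scaleC c (f n)"]) auto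
qed

lemma scaleC_2: "scaleC 2 x = x + (x::'a::chilbert)"
  by (metis one_add_one scaleC_add_left scaleC_one)

lemma proj_expand:
  assumes "y \<noteq> 0"
  shows "(norm (z - scaleC (cinner z y / cinner y y) y))^2 = (norm z)^2 - (cmod (cinner z y))^2 / (norm y)^2"
proof -
  define t where "t = cinner z y / cinner y y"
  have yy: "cinner y y = of_real ((norm y)^2)" by (rule cinner_self_norm)
  have "complex_of_real ((norm (z - scaleC t y))^2) = cinner (z - scaleC t y) (z - scaleC t y)"
    by (simp add: cinner_self_norm)
  also have "\<dots> = cinner z z - cnj t * cinner z y - t * cinner y z + t * cnj t * cinner y y"
    by (simp add: cinner_simps algebra_simps)
  also have "\<dots> = cinner z z - cinner z y * cnj (cinner z y) / cinner y y"
    using assms by (simp add: t_def cinner_commute[of y z] yy field_simps)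
  also have "\<dots> = complex_of_real ((norm z)^2 - (cmod (cinner z y))^2 / (norm y)^2)"
    by (simp only: complex_norm_square[symmetric] yy cinner_self_norm[of z] of_real_diff of_real_divide)
  finally show ?thesis unfolding t_def using of_real_eq_iff by blast
qed

lemma parallelogram:
  "(norm (u + v::'a::chilbert))^2 + (norm (u - v))^2 = 2 * (norm u)^2 + 2 * (norm v)^2"
  using norm_sq_add[of u v] norm_sq_add[of u "-v"] by (simp add: cinner_minus_right)

lemma min_dist_exists:
  assumes sub: "csubspace M" and cl: "closed M"
  shows "\<exists>p\<in>M. \<forall>q\<in>M. norm (x - p) \<le> norm (x - q)"
proof -
  define D where "D = (\<lambda>m. norm (x - m)) ` M"
  define \<delta> where "\<delta> = Inf D"
  have M0: "0 \<in> M" using sub unfolding csubspace_def by blast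
  have Dne: "D \<noteq> {}" using M0 unfolding D_def by blast
  have bdd: "bdd_below D" unfolding D_def by (rule bdd_belowI[of _ 0]) auto
  have low: "\<delta> \<le> norm (x - q)" if "q \<in> M" for q
    unfolding \<delta>_def D_def using bdd D_def that by (auto intro!: cInf_lower)
  have d0: "\<delta> \<ge> 0" using low[OF M0] Dne bdd unfolding \<delta>_def D_def
    by (auto intro!: cInf_greatest)
  have "\<exists>m\<in>M. norm (x - m) < \<delta> + 1 / real (Suc n)" for n
  proof -
    have "Inf D < \<delta> + 1 / real (Suc n)" unfolding \<delta>_def by simp
    from cInf_lessD[OF Dne this] show ?thesis unfolding D_def by auto
  qed
  then obtain m where m: "\<And>n. m n \<in> M" "\<And>n. norm (x - m n) < \<delta> + 1 / real (Suc n)"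
    by metis
  have mid: "scaleC (1/2) (m a + m b) \<in> M" for a b
    using sub m(1) unfolding csubspace_def by blast
  have est: "(norm (m a - m b))^2 \<le> (4 * \<delta> + 2) * (1 / real (Suc a) + 1 / real (Suc b))" for a b
  proof -
    define ra where "ra = 1 / real (Suc a)"
    define rb where "rb = 1 / real (Suc b)"
    have ra: "0 \<le> ra" "ra \<le> 1" unfolding ra_def by (auto simp: field_simps)
    have rb: "0 \<le> rb" "rb \<le> 1" unfolding rb_def by (auto simp: field_simps)
    have s2: "scaleC 2 (x - scaleC (1/2) (m a + m b)) = (x + x) - (m a + m b)"
      by (simp add: scaleC_diff_right scaleC_scaleC scaleC_2 scaleC_one)
    have "(x - m a) + (x - m b) = scaleC 2 (x - scaleC (1/2) (m a + m b))"
      unfolding s2 by (simp add: algebra_simps)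
    then have "norm ((x - m a) + (x - m b)) = 2 * norm (x - scaleC (1/2) (m a + m b))"
      by (simp add: norm_scaleC)
    moreover have "\<delta> \<le> norm (x - scaleC (1/2) (m a + m b))" by (rule low[OF mid])
    ultimately have A: "(norm ((x - m a) + (x - m b)))^2 \<ge> 4 * \<delta>^2"
      using d0 by (simp add: power_mult_distrib power_mono)
    have B: "(norm (x - m a))^2 \<le> (\<delta> + ra)^2"
      using m(2)[of a] ra_def by (intro power_mono) auto
    have C: "(norm (x - m b))^2 \<le> (\<delta> + rb)^2"
      using m(2)[of b] rb_def by (intro power_mono) auto
    have P: "(norm ((x - m a) + (x - m b)))^2 + (norm (m a - m b))^2 = 2 * (norm (x - m a))^2 + 2 * (norm (x - m b))^2"
      using parallelogram[of "x - m a" "x - m b"] by (simp add: norm_minus_commute)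
    have "(norm (m a - m b))^2 \<le> 2 * (\<delta> + ra)^2 + 2 * (\<delta> + rb)^2 - 4 * \<delta>^2"
      using A B C P by linarith
    also have "\<dots> = 4 * \<delta> * ra + 2 * ra * ra + 4 * \<delta> * rb + 2 * rb * rb"
      by (simp add: power2_eq_square algebra_simps)
    also have "\<dots> \<le> 4 * \<delta> * ra + 2 * ra + 4 * \<delta> * rb + 2 * rb"
      using ra rb by (intro add_mono mult_left_mono order_refl) (auto simp: mult_left_le)
    also have "\<dots> = (4 * \<delta> + 2) * (ra + rb)" by (simp add: algebra_simps)
    finally show ?thesis unfolding ra_def rb_def .
  qed
  have "Cauchy m"
  proof (rule CauchyI)
    fix e :: real assume e: "0 < e"
    obtain N where N: "2 * (4 * \<delta> + 2) / e^2 < real (Suc N)"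
      using reals_Archimedean2 by (metis less_Suc_eq of_nat_Suc add.commute add_strict_increasing zero_less_one less_imp_le)
    show "\<exists>M. \<forall>a\<ge>M. \<forall>b\<ge>M. norm (m a - m b) < e"
    proof (intro exI allI impI)
      fix a b assume ab: "N \<le> a" "N \<le> b"
      have ha: "1 / real (Suc a) \<le> 1 / real (Suc N)" using ab by (simp add: frac_le)
      have hb: "1 / real (Suc b) \<le> 1 / real (Suc N)" using ab by (simp add: frac_le)
      have "(norm (m a - m b))^2 \<le> (4 * \<delta> + 2) * (1 / real (Suc a) + 1 / real (Suc b))" by (rule est)
      also have "\<dots> \<le> (4 * \<delta> + 2) * (2 / real (Suc N))"
        using ha hb d0 by (intro mult_left_mono) auto
      also have "\<dots> < e^2"
        using N e d0 by (simp add: field_simps)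
      finally have "(norm (m a - m b))^2 < e^2" .
      then show "norm (m a - m b) < e" using e by (simp add: power_less_imp_less_base less_imp_le)
    qed
  qed
  then obtain p where p: "m \<longlonglongrightarrow> p" using Cauchy_convergent_iff convergent_def by blast
  have pM: "p \<in> M" using closed_sequentially[OF cl m(1) p] .
  have "norm (x - p) \<le> \<delta>"
  proof (rule LIMSEQ_le)
    show "(\<lambda>n. norm (x - m n)) \<longlonglongrightarrow> norm (x - p)" by (intro tendsto_intros p)
    show "(\<lambda>n. \<delta> + 1 / real (Suc n)) \<longlonglongrightarrow> \<delta>"
    proof -
      have "(\<lambda>n. 1 / real (Suc n)) \<longlonglongrightarrow> 0"
        using LIMSEQ_inverse_real_of_nat by (simp add: inverse_eq_divide del: of_nat_Suc)
      from tendsto_add[OF tendsto_const[of \<delta>] this] show ?thesis by simp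
    qed
    show "\<exists>N. \<forall>n\<ge>N. norm (x - m n) \<le> \<delta> + 1 / real (Suc n)" using m(2) less_imp_le by blast
  qed
  then show ?thesis using pM low by (meson order.trans)
qed

lemma proj_exists:
  assumes sub: "csubspace M" and cl: "closed M"
  shows "\<exists>p\<in>M. x - p \<in> perp M"
proof -
  obtain p where pM: "p \<in> M" and pmin: "\<And>q. q \<in> M \<Longrightarrow> norm (x - p) \<le> norm (x - q)"
    using min_dist_exists[OF assms] by blast
  have "x - p \<in> perp M"
  proof (rule perpI)
    fix y assume yM: "y \<in> M"
    show "cinner (x - p) y = 0"
    proof (rule ccontr)
      assume ne: "cinner (x - p) y \<noteq> 0"
      then have y0: "y \<noteq> 0" by auto
      define t where "t = cinner (x - p) y / cinner y y"
      have "p + scaleC t y \<in> M" using sub pM yM unfolding csubspace_def by blast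
      then have "norm (x - p) \<le> norm (x - (p + scaleC t y))" by (rule pmin)
      also have "x - (p + scaleC t y) = (x - p) - scaleC t y" by simp
      finally have "(norm (x - p))^2 \<le> (norm ((x - p) - scaleC t y))^2"
        by (simp add: power_mono)
      also have "\<dots> = (norm (x - p))^2 - (cmod (cinner (x - p) y))^2 / (norm y)^2"
        unfolding t_def by (rule proj_expand[OF y0])
      finally have "(cmod (cinner (x - p) y))^2 / (norm y)^2 \<le> 0" by simp
      moreover have "(cmod (cinner (x - p) y))^2 / (norm y)^2 > 0" using ne y0 by simp
      ultimately show False by simp
    qed
  qed
  then show ?thesis using pM by blast
qed

lemma perp_perp:
  assumes sub: "csubspace M" and cl: "closed M"
  shows "perp (perp M) = M"
proof
  show "M \<subseteq> perp (perp M)" by (auto intro!: perpI dest: perpD')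
next
  show "perp (perp M) \<subseteq> M"
  proof
    fix y assume y: "y \<in> perp (perp M)"
    obtain p where pM: "p \<in> M" and yp: "y - p \<in> perp M" using proj_exists[OF assms] by blast
    have "cinner y (y - p) = 0" using y yp by (rule perpD)
    moreover have "cinner p (y - p) = 0" using yp pM by (rule perpD')
    ultimately have "cinner (y - p) (y - p) = 0" by (simp add: cinner_diff_left)
    then have "y = p" by simp
    then show "y \<in> M" using pM by simp
  qed
qed

lemma perp_trivial_UNIV:
  assumes sub: "csubspace M" and cl: "closed M" and triv: "\<And>x. x \<in> perp M \<Longrightarrow> x = 0"
  shows "M = UNIV"
proof -
  have "x \<in> M" for x
  proof -
    obtain p where "p \<in> M" "x - p \<in> perp M" using proj_exists[OF sub cl] by blast
    then show ?thesis using triv by force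
  qed
  then show ?thesis by auto
qed

section \<open>Adjoint\<close>

lemma riesz_point:
  assumes T: "bounded_op T"
  shows "\<exists>z. \<forall>x. cinner (T x) y = cinner x z"
proof (cases "\<forall>x. cinner (T x) y = 0")
  case True then show ?thesis by (intro exI[of _ 0]) simp
next
  case False
  define f where "f x = cinner (T x) y" for x
  define K where "K = {x. f x = 0}"
  have fadd: "f (a + b) = f a + f b" for a b
    unfolding f_def using T by (simp add: bounded_op_add cinner_add_left)
  have fscale: "f (scaleC c a) = c * f a" for c a
    unfolding f_def using T by (simp add: bounded_op_scaleC cinner_scaleC_left)
  have fdiff: "f (a - b) = f a - f b" for a b
    unfolding f_def using T by (simp add: bounded_op_diff cinner_diff_left)
  have f0: "f 0 = 0" unfolding f_def using T by (simp add: bounded_op_zero)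
  have subK: "csubspace K" unfolding csubspace_def K_def using fadd fscale f0 by auto
  have clK: "closed K" unfolding K_def f_def
    by (rule closed_Collect_eq) (intro continuous_intros bounded_op_continuous[OF T])+
  obtain w where w: "f w \<noteq> 0" using False unfolding f_def by blast
  obtain p where pK: "p \<in> K" and up: "w - p \<in> perp K" using proj_exists[OF subK clK] by blast
  define u where "u = w - p"
  have fu: "f u \<noteq> 0" using w pK unfolding u_def K_def by (simp add: fdiff)
  then have u0: "u \<noteq> 0" using f0 by auto
  have uu: "cinner u u \<noteq> 0" using u0 by simp
  define z where "z = scaleC (cnj (f u) / cinner u u) u"
  show ?thesis
  proof (intro exI allI)
    fix x
    define c where "c = f x / f u"
    have "f (x - scaleC c u) = 0" using fu by (simp add: fdiff fscale c_def)
    then have "x - scaleC c u \<in> K" unfolding K_def by simp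
    then have "cinner (x - scaleC c u) u = 0" using up unfolding u_def by (rule perpD'[rotated])
    then have xu: "cinner x u = c * cinner u u" by (simp add: cinner_simps)
    have "cinner x z = (f u / cinner u u) * cinner x u"
      unfolding z_def by (simp add: cinner_scaleC_right)
    also have "\<dots> = f x" using xu uu fu by (simp add: c_def field_simps)
    finally show "cinner (T x) y = cinner x z" unfolding f_def by simp
  qed
qed

lemma adj_exists: "bounded_op T \<Longrightarrow> \<exists>S. \<forall>x y. cinner (T x) y = cinner x (S y)"
  using riesz_point by metis

lemma adj_char:
  assumes "bounded_op T" shows "cinner (T x) y = cinner x (adj T y)"
proof -
  have ex1: "\<exists>!S. \<forall>x y. cinner (T x) y = cinner x (S y)"
  proof (rule ex_ex1I)
    show "\<exists>S. \<forall>x y. cinner (T x) y = cinner x (S y)" by (rule adj_exists[OF assms])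
  next
    fix S1 S2 assume 1: "\<forall>x y. cinner (T x) y = cinner x (S1 y)" and 2: "\<forall>x y. cinner (T x) y = cinner x (S2 y)"
    show "S1 = S2" by (rule ext, rule cinner_ext_right) (metis 1 2)
  qed
  show ?thesis unfolding adj_def using theI'[OF ex1] by blast
qed

lemma adj_unique:
  assumes "bounded_op T" "\<And>x y. cinner (T x) y = cinner x (S y)"
  shows "adj T = S"
  by (rule ext, rule cinner_ext_right) (metis assms adj_char)

lemma adj_char2:
  assumes "bounded_op T" shows "cinner (adj T x) y = cinner x (T y)"
  by (metis adj_char assms cinner_commute)

lemma bounded_op_pos_bound:
  assumes "bounded_op T" obtains K where "K > 0" "\<And>x. norm (T x) \<le> K * norm x"
  using bounded_linear.pos_bounded[OF bounded_op_linear[OF assms]] by (metis mult.commute)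

lemma adj_bounded:
  assumes T: "bounded_op T" shows "bounded_op (adj T)"
proof -
  obtain K where K: "K > 0" "\<And>x. norm (T x) \<le> K * norm x" using bounded_op_pos_bound[OF T] by blast
  show ?thesis
  proof (rule bounded_opI[of _ K])
    fix x y
    show "adj T (x + y) = adj T x + adj T y"
      by (rule cinner_ext_right) (simp add: adj_char[OF T, symmetric] cinner_add_right)
  next
    fix c x
    show "adj T (scaleC c x) = scaleC c (adj T x)"
      by (rule cinner_ext_right) (simp add: adj_char[OF T, symmetric] cinner_scaleC_right)
  next
    fix y
    define z where "z = adj T y"
    have "(norm z)^2 = Re (cinner (T z) y)" by (simp add: adj_char[OF T] z_def norm_sq_cinner)
    also have "\<dots> \<le> cmod (cinner (T z) y)" by (rule complex_Re_le_cmod)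
    also have "\<dots> \<le> norm (T z) * norm y" by (rule cinner_cauchy_schwarz)
    also have "\<dots> \<le> K * norm z * norm y" using K by (simp add: mult_right_mono)
    finally have "norm z * norm z \<le> (K * norm y) * norm z" by (simp add: power2_eq_square algebra_simps)
    then show "norm (adj T y) \<le> K * norm y" unfolding z_def[symmetric]
      by (cases "norm z = 0") (use K in auto)
  qed
qed

lemma adj_adj: assumes T: "bounded_op T" shows "adj (adj T) = T"
proof (rule adj_unique[OF adj_bounded[OF T]])
  fix x y show "cinner (adj T x) y = cinner x (T y)" by (rule adj_char2[OF T])
qed

lemma contraction_adj:
  assumes T: "contraction T" shows "contraction (adj T)"
proof -
  have Tb: "bounded_op T" using T unfolding contraction_def by simp
  have "norm (adj T y) \<le> norm y" for y
  proof -
    define z where "z = adj T y"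
    have "(norm z)^2 = Re (cinner (T z) y)" by (simp add: adj_char[OF Tb] z_def norm_sq_cinner)
    also have "\<dots> \<le> cmod (cinner (T z) y)" by (rule complex_Re_le_cmod)
    also have "\<dots> \<le> norm (T z) * norm y" by (rule cinner_cauchy_schwarz)
    also have "\<dots> \<le> norm z * norm y" using T unfolding contraction_def by (simp add: mult_right_mono)
    finally have "norm z * norm z \<le> norm y * norm z" by (simp add: power2_eq_square algebra_simps)
    then show "norm (adj T y) \<le> norm y" unfolding z_def[symmetric]
      by (cases "norm z = 0") auto
  qed
  then show ?thesis unfolding contraction_def using adj_bounded[OF Tb] by simp
qed

definition gco :: "nat \<Rightarrow> real" where
  "gco n = (-1)^n * ((1/2) gchoose n)"

lemma gco_0[simp]: "gco 0 = 1" by (simp add: gco_def)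

lemma gco_alt: "gco n = ((real n - 3/2) gchoose n)"
proof -
  have "gco n = (-1)^n * ((-1)^n * ((real n - 1/2 - 1) gchoose n))"
    unfolding gco_def by (subst gbinomial_negated_upper) simp
  also have "\<dots> = ((-1)^n * (-1)^n) * ((real n - 3/2) gchoose n)" by (simp add: mult.assoc)
  also have "(-1::real)^n * (-1)^n = 1" by (simp flip: power_mult_distrib)
  finally show ?thesis by simp
qed

lemma gco_nonpos: assumes "n \<ge> 1" shows "gco n \<le> 0"
proof -
  obtain m where n: "n = Suc m" using assms by (cases n) auto
  define Q where "Q = prod (\<lambda>i. (real (Suc m) - 3/2) - of_nat i) {0..<m}"
  have "gco n = prod (\<lambda>i. (real (Suc m) - 3/2) - of_nat i) {0..m} / fact (Suc m)"
    unfolding gco_alt n by (rule gbinomial_Suc)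
  also have "prod (\<lambda>i. (real (Suc m) - 3/2) - of_nat i) {0..m} = Q * (real (Suc m) - 3/2 - real m)"
    unfolding Q_def
    by (simp add: atLeastLessThanSuc_atLeastAtMost[symmetric] prod.atLeast0_lessThan_Suc del: of_nat_Suc)
  finally have eq: "gco n = Q * (real (Suc m) - 3/2 - real m) / fact (Suc m)" .
  have "Q \<ge> 0" unfolding Q_def by (rule prod_nonneg) auto
  then have "Q * (real (Suc m) - 3/2 - real m) \<le> 0"
    by (simp add: mult_nonneg_nonpos)
  then show ?thesis unfolding eq by (simp add: divide_nonpos_pos)
qed

lemma gco_partial_nonneg: "0 \<le> (\<Sum>k\<le>N. gco k)"
proof -
  have "(\<Sum>k\<le>N. gco k) = (\<Sum>k\<le>N. ((1/2::real) gchoose k) * (-1)^k)"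
    unfolding gco_def by (simp add: mult.commute)
  also have "\<dots> = (-1)^N * ((1/2 - 1) gchoose N)" by (rule gbinomial_sum_lower_neg)
  also have "((1/2 - 1::real) gchoose N) = (-1)^N * ((real N - (1/2 - 1) - 1) gchoose N)"
    by (rule gbinomial_negated_upper)
  also have "(-1::real)^N * ((-1)^N * ((real N - (1/2 - 1) - 1) gchoose N)) = ((real N - 1/2) gchoose N)"
    by (simp add: mult.assoc[symmetric] flip: power_mult_distrib)
  also have "\<dots> = (\<Prod>i=0..<N. (real N - 1/2) - of_nat i) / fact N" by (rule gbinomial_prod_rev)
  also have "\<dots> \<ge> 0" by (intro divide_nonneg_pos prod_nonneg) auto
  finally show ?thesis .
qed

lemma gco_abs_partial: "(\<Sum>i<n. \<bar>gco i\<bar>) \<le> 2"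
proof (cases n)
  case 0 then show ?thesis by simp
next
  case (Suc N)
  have "(\<Sum>i<n. \<bar>gco i\<bar>) = (\<Sum>i<n. (if i = 0 then 2 * gco i else 0) - gco i)"
  proof (intro sum.cong refl)
    fix i assume "i \<in> {..<n}"
    show "\<bar>gco i\<bar> = (if i = 0 then 2 * gco i else 0) - gco i"
      using gco_nonpos[of i] by (cases "i = 0") auto
  qed
  also have "\<dots> = 2 - (\<Sum>i\<le>N. gco i)"
    using Suc by (simp add: sum_subtractf lessThan_Suc_atMost)
  also have "\<dots> \<le> 2" using gco_partial_nonneg[of N] by simp
  finally show ?thesis .
qed

lemma gco_abs_summable: "summable (\<lambda>n. \<bar>gco n\<bar>)"
  by (rule summableI_nonneg_bounded[of _ 2]) (auto intro: gco_abs_partial)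

lemma gco_summable: "summable gco"
  by (rule summable_rabs_cancel[OF gco_abs_summable])

lemma gco_suminf_nonneg: "0 \<le> suminf gco"
proof (rule LIMSEQ_le_const)
  show "(\<lambda>n. \<Sum>i<n. gco i) \<longlonglongrightarrow> suminf gco" by (rule summable_LIMSEQ[OF gco_summable])
  show "\<exists>N. \<forall>n\<ge>N. 0 \<le> (\<Sum>i<n. gco i)"
  proof (intro exI allI impI)
    fix n :: nat assume "1 \<le> n"
    then obtain N where "n = Suc N" by (cases n) auto
    then show "0 \<le> (\<Sum>i<n. gco i)" using gco_partial_nonneg[of N] by (simp add: lessThan_Suc_atMost)
  qed
qed

lemma gco_conv: "(\<Sum>i\<le>k. gco i * gco (k - i)) = (if k = 0 then 1 else if k = 1 then -1 else 0)"
proof -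
  have "(\<Sum>i\<le>k. gco i * gco (k - i)) = (\<Sum>i=0..k. (-1)^k * (((1/2::real) gchoose i) * ((1/2) gchoose (k - i))))"
    unfolding gco_def atMost_atLeast0
  proof (intro sum.cong refl)
    fix i assume "i \<in> {0..k}"
    then have "(-1::real)^i * (-1)^(k - i) = (-1)^k" by (simp flip: power_add)
    then show "(-1) ^ i * ((1 / 2::real) gchoose i) * ((-1) ^ (k - i) * ((1 / 2::real) gchoose (k - i))) =
       (-1) ^ k * (((1 / 2::real) gchoose i) * ((1 / 2::real) gchoose (k - i)))"
      by (metis (no_types, lifting) mult.assoc mult.left_commute)
  qed
  also have "\<dots> = (-1)^k * ((1/2 + 1/2::real) gchoose k)"
    by (simp add: sum_distrib_left[symmetric] gbinomial_Vandermonde)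
  also have "((1/2 + 1/2::real) gchoose k) = of_nat (1 choose k)"
    by (simp add: binomial_gbinomial)
  also have "(-1::real)^k * of_nat (1 choose k) = (if k = 0 then 1 else if k = 1 then -1 else 0)"
    by (cases k) (auto simp: binomial_eq_0)
  finally show ?thesis .
qed

section \<open>Positive operators\<close>

lemma positive_bounded: "positive_op R \<Longrightarrow> bounded_op R"
  unfolding positive_op_def by simp

lemma positive_real: "positive_op R \<Longrightarrow> cinner (R x) x \<in> \<real>"
  unfolding positive_op_def by simp

lemma positive_Re: "positive_op R \<Longrightarrow> 0 \<le> Re (cinner (R x) x)"
  unfolding positive_op_def by simp

lemma positive_selfadj:
  assumes P: "positive_op R" shows "cinner (R x) y = cinner x (R y)"
proof -
  have Rb: "bounded_op R" using P by (rule positive_bounded)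
  define D where "D a b = cinner (R a) b - cinner a (R b)" for a b
  have Duu: "D u u = 0" for u
  proof -
    have "cinner u (R u) = cnj (cinner (R u) u)" by (rule cinner_commute)
    also have "\<dots> = cinner (R u) u" using positive_real[OF P, of u] by (simp add: Reals_cnj_iff)
    finally show ?thesis unfolding D_def by simp
  qed
  have Dadd1: "D (a + b) c = D a c + D b c" for a b c
    unfolding D_def by (simp add: bounded_op_add[OF Rb] cinner_simps)
  have Dadd2: "D a (b + c) = D a b + D a c" for a b c
    unfolding D_def by (simp add: bounded_op_add[OF Rb] cinner_simps)
  have Dsc1: "D (scaleC t a) b = t * D a b" for t a b
    unfolding D_def by (simp add: bounded_op_scaleC[OF Rb] cinner_simps algebra_simps)
  have Dsc2: "D a (scaleC t b) = cnj t * D a b" for t a b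
    unfolding D_def by (simp add: bounded_op_scaleC[OF Rb] cinner_simps algebra_simps)
  have e1: "D (x + y) (x + y) = D x x + D x y + D y x + D y y" by (simp add: Dadd1 Dadd2)
  have h1: "D x y + D y x = 0" using e1 by (simp add: Duu)
  have e2: "D (x + scaleC \<i> y) (x + scaleC \<i> y) = D x x + cnj \<i> * D x y + \<i> * D y x + \<i> * cnj \<i> * D y y"
    by (simp add: Dadd1 Dadd2 Dsc1 Dsc2 algebra_simps)
  have h2: "cnj \<i> * D x y + \<i> * D y x = 0" using e2 by (simp add: Duu)
  then have "\<i> * (D y x - D x y) = 0" by (simp add: algebra_simps)
  then have "D y x = D x y" by simp
  then have "D x y = 0" using h1 by simp
  then show ?thesis unfolding D_def by simp
qed

lemma positive_zero:
  assumes P: "positive_op R" and z: "Re (cinner (R u) u) = 0"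
  shows "R u = 0"
proof -
  have Rb: "bounded_op R" using P by (rule positive_bounded)
  define a where "a = (norm (R u))^2"
  define c where "c = Re (cinner (R (R u)) (R u))"
  have c0: "c \<ge> 0" unfolding c_def by (rule positive_Re[OF P])
  have a0: "a \<ge> 0" unfolding a_def by simp
  have key: "0 \<le> 2 * t * a + t^2 * c" for t :: real
  proof -
    define v where "v = u + scaleC (of_real t) (R u)"
    have "cinner (R v) v = cinner (R u) u + of_real t * cinner (R u) (R u) + of_real t * cinner (R (R u)) u
        + of_real t * of_real t * cinner (R (R u)) (R u)"
      unfolding v_def by (simp add: bounded_op_add[OF Rb] bounded_op_scaleC[OF Rb] cinner_simps algebra_simps)
    also have "cinner (R (R u)) u = cinner (R u) (R u)" by (rule positive_selfadj[OF P])
    finally have "Re (cinner (R v) v) = 2 * t * a + t^2 * c"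
      using z by (simp add: a_def c_def cinner_self_norm[of "R u"] power2_eq_square)
    moreover have "0 \<le> Re (cinner (R v) v)" by (rule positive_Re[OF P])
    ultimately show ?thesis by simp
  qed
  have "a = 0"
  proof (rule ccontr)
    assume "a \<noteq> 0" then have ap: "a > 0" using a0 by simp
    define t where "t = - a / (c + 1)"
    have c1: "c + 1 \<noteq> 0" using c0 by simp
    have tc: "t * (c + 1) = - a" unfolding t_def using c1 by simp
    have "0 \<le> (2 * t * a + t^2 * c) * (c + 1)^2" using key[of t] by simp
    also have "(2 * t * a + t^2 * c) * (c + 1)^2 = 2 * a * (t * (c + 1)) * (c + 1) + (t * (c + 1))^2 * c"
      by (simp add: power2_eq_square algebra_simps)
    also have "\<dots> = - (a * a) * (c + 2)" unfolding tc by (simp add: power2_eq_square algebra_simps)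
    also have "\<dots> < 0" using ap c0 by (intro mult_neg_pos) auto
    finally show False by simp
  qed
  then show ?thesis unfolding a_def by simp
qed

section \<open>The operator B = S* S\<close>

definition sqB :: "('a::chilbert \<Rightarrow> 'a) \<Rightarrow> 'a \<Rightarrow> 'a" where
  "sqB S x = adj S (S x)"

definition sqrtop :: "('a::chilbert \<Rightarrow> 'a) \<Rightarrow> 'a \<Rightarrow> 'a" where
  "sqrtop S x = (\<Sum>n. gco n *\<^sub>R (sqB S ^^ n) x)"

context
  fixes S :: "'a::chilbert \<Rightarrow> 'a"
  assumes S: "contraction S"
begin

lemma S_bounded: "bounded_op S" using S unfolding contraction_def by simp

lemma S_norm: "norm (S x) \<le> norm x" using S unfolding contraction_def by simp

lemma sqB_bounded: "bounded_op (sqB S)"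
  unfolding sqB_def[abs_def] by (rule bounded_op_comp[OF adj_bounded[OF S_bounded] S_bounded])

lemma sqB_cinner: "cinner (sqB S x) y = cinner (S x) (S y)"
  unfolding sqB_def by (simp add: adj_char2[OF S_bounded])

lemma sqB_selfadj: "cinner (sqB S x) y = cinner x (sqB S y)"
  unfolding sqB_def by (simp add: adj_char2[OF S_bounded] adj_char[OF S_bounded])

lemma sqB_norm: "norm (sqB S x) \<le> norm x"
  unfolding sqB_def using contraction_adj[OF S] S_norm unfolding contraction_def
  by (meson order.trans)

abbreviation "Bn n \<equiv> (sqB S ^^ n)"

lemma Bn_bounded: "bounded_op (Bn n)"
  by (rule bounded_op_funpow[OF sqB_bounded])

lemma Bn_selfadj: "cinner (Bn n x) y = cinner x (Bn n y)"
proof (induction n arbitrary: x y)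
  case 0 then show ?case by simp
next
  case (Suc n)
  have "cinner (Bn (Suc n) x) y = cinner (sqB S (Bn n x)) y" by simp
  also have "\<dots> = cinner (Bn n x) (sqB S y)" by (rule sqB_selfadj)
  also have "\<dots> = cinner x (Bn n (sqB S y))" by (rule Suc.IH)
  also have "Bn n (sqB S y) = Bn (Suc n) y" by (simp add: funpow_swap1)
  finally show ?case .
qed

lemma Bn_norm: "norm (Bn n x) \<le> norm x"
proof (induction n)
  case 0 then show ?case by simp
next
  case (Suc n) then show ?case using sqB_norm[of "Bn n x"] by simp
qed

lemma Bn_add: "Bn m (Bn n x) = Bn (m + n) x"
  by (simp add: funpow_add)

lemma Bn_real: "cinner (Bn n x) x \<in> \<real>"
proof -
  have "cnj (cinner (Bn n x) x) = cinner x (Bn n x)" by (simp add: cinner_commute[of x])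
  also have "\<dots> = cinner (Bn n x) x" by (simp add: Bn_selfadj)
  finally show ?thesis by (simp add: Reals_cnj_iff)
qed

lemma Bn_nonneg: "0 \<le> Re (cinner (Bn n x) x)"
proof (cases "even n")
  case True
  then obtain m where "n = 2 * m" by (rule evenE)
  then have n: "n = m + m" by simp
  have "cinner (Bn n x) x = cinner (Bn m (Bn m x)) x" unfolding n by (simp add: Bn_add)
  also have "\<dots> = cinner (Bn m x) (Bn m x)" by (rule Bn_selfadj)
  finally show ?thesis by (simp add: cinner_self_norm)
next
  case False
  then obtain m where "n = 2 * m + 1" by (rule oddE)
  then have n: "n = m + Suc m" by simp
  have "cinner (Bn n x) x = cinner (Bn m (sqB S (Bn m x))) x" unfolding n
    by (simp only: funpow_add funpow.simps(2) comp_def)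
  also have "\<dots> = cinner (sqB S (Bn m x)) (Bn m x)" by (rule Bn_selfadj)
  also have "\<dots> = cinner (S (Bn m x)) (S (Bn m x))" by (rule sqB_cinner)
  finally show ?thesis by (simp add: cinner_self_norm)
qed

lemma Bn_le: "Re (cinner (Bn n x) x) \<le> (norm x)^2"
proof -
  have "Re (cinner (Bn n x) x) \<le> cmod (cinner (Bn n x) x)" by (rule complex_Re_le_cmod)
  also have "\<dots> \<le> norm (Bn n x) * norm x" by (rule cinner_cauchy_schwarz)
  also have "\<dots> \<le> norm x * norm x" by (rule mult_right_mono[OF Bn_norm]) simp
  finally show ?thesis by (simp add: power2_eq_square)
qed

lemma sq_summable_norm: "summable (\<lambda>n. norm (gco n *\<^sub>R Bn n x))"
proof (rule summable_comparison_test'[of "\<lambda>n. \<bar>gco n\<bar> * norm x" 0])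
  show "summable (\<lambda>n. \<bar>gco n\<bar> * norm x)" by (rule summable_mult2[OF gco_abs_summable])
  fix n show "norm (norm (gco n *\<^sub>R Bn n x)) \<le> \<bar>gco n\<bar> * norm x"
    using Bn_norm[of n x] by (simp add: mult_left_mono)
qed

lemma sq_summable: "summable (\<lambda>n. gco n *\<^sub>R Bn n x)"
  by (rule summable_norm_cancel[OF sq_summable_norm])

lemma sqrtop_bounded: "bounded_op (sqrtop S)"
proof (rule bounded_opI[of _ "\<Sum>n. \<bar>gco n\<bar>"])
  fix x y
  have "sqrtop S (x + y) = (\<Sum>n. gco n *\<^sub>R Bn n x + gco n *\<^sub>R Bn n y)"
    unfolding sqrtop_def by (simp add: bounded_op_add[OF Bn_bounded] scaleR_add_right)
  also have "\<dots> = sqrtop S x + sqrtop S y"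
    unfolding sqrtop_def by (rule suminf_add[symmetric, OF sq_summable sq_summable])
  finally show "sqrtop S (x + y) = sqrtop S x + sqrtop S y" .
next
  fix c x
  have "scaleC c (sqrtop S x) = (\<Sum>n. scaleC c (gco n *\<^sub>R Bn n x))"
    unfolding sqrtop_def by (rule bounded_linear.suminf[OF bounded_linear_scaleC sq_summable])
  also have "\<dots> = sqrtop S (scaleC c x)"
    unfolding sqrtop_def by (simp add: bounded_op_scaleC[OF Bn_bounded] scaleC_scaleR)
  finally show "sqrtop S (scaleC c x) = scaleC c (sqrtop S x)" by simp
next
  fix x
  have "norm (sqrtop S x) \<le> (\<Sum>n. norm (gco n *\<^sub>R Bn n x))"
    unfolding sqrtop_def by (rule summable_norm[OF sq_summable_norm])
  also have "\<dots> \<le> (\<Sum>n. \<bar>gco n\<bar> * norm x)"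
  proof (rule suminf_le[OF _ sq_summable_norm summable_mult2[OF gco_abs_summable]])
    fix n show "norm (gco n *\<^sub>R Bn n x) \<le> \<bar>gco n\<bar> * norm x"
      using Bn_norm[of n x] by (simp add: mult_left_mono)
  qed
  also have "\<dots> = (\<Sum>n. \<bar>gco n\<bar>) * norm x" by (rule suminf_mult2[symmetric, OF gco_abs_summable])
  finally show "norm (sqrtop S x) \<le> (\<Sum>n. \<bar>gco n\<bar>) * norm x" .
qed

end

lemma double_series:
  fixes v :: "nat \<times> nat \<Rightarrow> 'b::banach" and a b :: "nat \<Rightarrow> real"
  assumes a0: "\<And>i. 0 \<le> a i" and b0: "\<And>j. 0 \<le> b j" and sa: "summable a" and sb: "summable b"
    and bound: "\<And>i j. norm (v (i,j)) \<le> a i * b j"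
    and row: "\<And>i. ((\<lambda>j. v (i,j)) has_sum r i) UNIV"
    and rows: "(r has_sum S) UNIV"
    and dsum: "((\<lambda>k. \<Sum>i\<le>k. v (i, k - i)) has_sum D) UNIV"
  shows "S = D"
proof -
  have bound': "norm (v p) \<le> a (fst p) * b (snd p)" for p
    using bound[of "fst p" "snd p"] by simp
  have abs: "(\<lambda>p. norm (v p)) summable_on UNIV"
  proof (rule nonneg_bdd_above_summable_on)
    show "\<And>p. p \<in> UNIV \<Longrightarrow> 0 \<le> norm (v p)" by simp
    show "bdd_above (sum (\<lambda>p. norm (v p)) ` {F. F \<subseteq> UNIV \<and> finite F})"
    proof (rule bdd_aboveI2[where M = "suminf a * suminf b"])
      fix F :: "(nat \<times> nat) set" assume "F \<in> {F. F \<subseteq> UNIV \<and> finite F}"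
      then have fin: "finite F" by simp
      define n where "n = Suc (Max (fst ` F \<union> snd ` F))"
      have sub: "F \<subseteq> {..<n} \<times> {..<n}"
      proof
        fix p assume pF: "p \<in> F"
        have "fst p \<le> Max (fst ` F \<union> snd ` F)" using fin pF by (intro Max_ge) auto
        moreover have "snd p \<le> Max (fst ` F \<union> snd ` F)" using fin pF by (intro Max_ge) auto
        ultimately show "p \<in> {..<n} \<times> {..<n}" unfolding n_def by (cases p) auto
      qed
      have "sum (\<lambda>p. norm (v p)) F \<le> sum (\<lambda>p. norm (v p)) ({..<n} \<times> {..<n})"
        by (rule sum_mono2) (use sub in auto)
      also have "\<dots> \<le> sum (\<lambda>p. a (fst p) * b (snd p)) ({..<n} \<times> {..<n})"
        by (rule sum_mono) (rule bound')
      also have "\<dots> = (\<Sum>i<n. a i) * (\<Sum>j<n. b j)"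
        by (simp add: sum_product sum.cartesian_product split_def)
      also have "\<dots> \<le> suminf a * suminf b"
        by (intro mult_mono sum_le_suminf sa sb sum_nonneg suminf_nonneg) (auto simp: a0 b0)
      finally show "sum (\<lambda>p. norm (v p)) F \<le> suminf a * suminf b" .
    qed
  qed
  then have summ: "v summable_on UNIV" by (rule abs_summable_summable)
  define T where "T = infsum v UNIV"
  have T: "(v has_sum T) (Sigma UNIV (\<lambda>_. UNIV))" unfolding T_def using summ by simp
  have "(r has_sum T) UNIV" by (rule has_sum_SigmaD[OF T row])
  then have ST: "S = T" using rows has_sum_unique by blast
  have T2: "((\<lambda>(k,i). v (i, k - i)) has_sum T) (Sigma UNIV (\<lambda>k. {..k}))"
  proof -
    have "((\<lambda>(k,i). v (i, k - i)) has_sum T) (Sigma UNIV (\<lambda>k. {..k})) = (v has_sum T) (Sigma UNIV (\<lambda>_. UNIV))"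
      by (rule has_sum_reindex_bij_witness[where j = "\<lambda>(k,i). (i, k - i)" and i = "\<lambda>(a,b). (a + b, a)"]) auto
    then show ?thesis using T by simp
  qed
  have "((\<lambda>k. \<Sum>i\<le>k. v (i, k - i)) has_sum T) UNIV"
    by (rule has_sum_SigmaD[OF T2]) (simp add: has_sum_finite)
  then have "D = T" using dsum has_sum_unique by blast
  then show ?thesis using ST by simp
qed

lemma bounded_op_scaleR: "bounded_op T \<Longrightarrow> T (r *\<^sub>R x) = r *\<^sub>R T x"
  by (metis bounded_op_scaleC scaleC_of_real)

context
  fixes S :: "'a::chilbert \<Rightarrow> 'a"
  assumes S: "contraction S"
begin

lemma sqrtop_sums: "(\<lambda>n. gco n *\<^sub>R Bn S n x) sums sqrtop S x"
  unfolding sqrtop_def by (rule summable_sums[OF sq_summable[OF S]])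

lemma sqrtop_sq: "sqrtop S (sqrtop S x) = x - sqB S x"
proof -
  define R where "R = sqrtop S"
  define v where "v p = (gco (fst p) * gco (snd p)) *\<^sub>R Bn S (fst p + snd p) x" for p
  define r where "r i = gco i *\<^sub>R Bn S i (R x)" for i
  have bound: "norm (v (i,j)) \<le> (\<bar>gco i\<bar> * norm x) * \<bar>gco j\<bar>" for i j
  proof -
    have "norm (v (i,j)) = \<bar>gco i * gco j\<bar> * norm (Bn S (i + j) x)" by (simp add: v_def)
    also have "\<dots> \<le> \<bar>gco i * gco j\<bar> * norm x" by (rule mult_left_mono[OF Bn_norm[OF S]]) simp
    finally show ?thesis by (simp add: abs_mult mult_ac)
  qed
  show ?thesis unfolding R_def[symmetric]
  proof (rule double_series[of "\<lambda>i. \<bar>gco i\<bar> * norm x" "\<lambda>j. \<bar>gco j\<bar>" v r])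
    show "summable (\<lambda>i. \<bar>gco i\<bar> * norm x)" by (rule summable_mult2[OF gco_abs_summable])
    show "summable (\<lambda>j. \<bar>gco j\<bar>)" by (rule gco_abs_summable)
    show "norm (v (i, j)) \<le> \<bar>gco i\<bar> * norm x * \<bar>gco j\<bar>" for i j by (rule bound)
  next
    fix i
    have "(\<lambda>j. gco i *\<^sub>R Bn S i (gco j *\<^sub>R Bn S j x)) sums (gco i *\<^sub>R Bn S i (R x))"
      unfolding R_def
      by (intro sums_scaleR_right bounded_linear.sums[OF bounded_op_linear[OF Bn_bounded[OF S]]] sqrtop_sums)
    moreover have "gco i *\<^sub>R Bn S i (gco j *\<^sub>R Bn S j x) = v (i, j)" for j
      by (simp add: v_def bounded_op_scaleR[OF Bn_bounded[OF S]] Bn_add[OF S])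
    ultimately have sums: "(\<lambda>j. v (i, j)) sums r i" unfolding r_def by simp
    have "summable (\<lambda>j. norm (v (i, j)))"
      by (rule summable_comparison_test'[of "\<lambda>j. (\<bar>gco i\<bar> * norm x) * \<bar>gco j\<bar>" 0])
         (use summable_mult[OF gco_abs_summable, of "\<bar>gco i\<bar> * norm x"] bound in auto)
    then show "((\<lambda>j. v (i, j)) has_sum r i) UNIV"
      by (rule norm_summable_imp_has_sum[OF _ sums])
  next
    show "(r has_sum R (R x)) UNIV"
      unfolding r_def R_def
      by (rule norm_summable_imp_has_sum[OF sq_summable_norm[OF S] sqrtop_sums])
  next
    have d: "(\<Sum>i\<le>k. v (i, k - i)) = (if k = 0 then 1 else if k = 1 then -1 else 0) *\<^sub>R Bn S k x" for k
    proof -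
      have "(\<Sum>i\<le>k. v (i, k - i)) = (\<Sum>i\<le>k. (gco i * gco (k - i)) *\<^sub>R Bn S k x)"
        by (intro sum.cong refl) (simp add: v_def)
      also have "\<dots> = (\<Sum>i\<le>k. gco i * gco (k - i)) *\<^sub>R Bn S k x" by (simp add: scaleR_sum_left)
      finally show ?thesis by (simp add: gco_conv)
    qed
    show "((\<lambda>k. \<Sum>i\<le>k. v (i, k - i)) has_sum (x - sqB S x)) UNIV"
      unfolding d by (rule has_sum_finite_neutralI[where B = "{0,1}"]) auto
  qed auto
qed

lemma sqrtop_cinner: "cinner (sqrtop S x) x = of_real (\<Sum>n. gco n * Re (cinner (Bn S n x) x))"
proof -
  have bl: "bounded_linear (\<lambda>y. cinner y x)"
    by (rule bounded_bilinear.bounded_linear_left[OF bounded_bilinear_cinner])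
  have "cinner (sqrtop S x) x = (\<Sum>n. cinner (gco n *\<^sub>R Bn S n x) x)"
    unfolding sqrtop_def by (rule bounded_linear.suminf[OF bl sq_summable[OF S]])
  also have "\<dots> = (\<Sum>n. of_real (gco n * Re (cinner (Bn S n x) x)))"
  proof (intro suminf_cong)
    fix n
    have "cinner (Bn S n x) x = of_real (Re (cinner (Bn S n x) x))"
      using Bn_real[OF S, of n x] by (simp add: complex_is_Real_iff complex_eq_iff)
    then show "cinner (gco n *\<^sub>R Bn S n x) x = of_real (gco n * Re (cinner (Bn S n x) x))"
      by (simp add: cinner_scaleR_left)
  qed
  also have "\<dots> = of_real (\<Sum>n. gco n * Re (cinner (Bn S n x) x))"
  proof (rule suminf_of_real[symmetric])
    show "summable (\<lambda>n. gco n * Re (cinner (Bn S n x) x))"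
    proof (rule summable_comparison_test'[of "\<lambda>n. \<bar>gco n\<bar> * (norm x)^2" 0])
      show "summable (\<lambda>n. \<bar>gco n\<bar> * (norm x)^2)" by (rule summable_mult2[OF gco_abs_summable])
      fix n show "norm (gco n * Re (cinner (Bn S n x) x)) \<le> \<bar>gco n\<bar> * (norm x)^2"
        using Bn_nonneg[OF S, of n x] Bn_le[OF S, of n x] by (simp add: abs_mult mult_left_mono)
    qed
  qed
  finally show ?thesis .
qed

lemma sqrtop_positive: "positive_op (sqrtop S)"
  unfolding positive_op_def
proof (intro conjI allI sqrtop_bounded[OF S])
  fix x
  show "cinner (sqrtop S x) x \<in> \<real>" unfolding sqrtop_cinner by simp
  define b where "b n = Re (cinner (Bn S n x) x)" for n
  have sb: "summable (\<lambda>n. gco n * b n)"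
  proof (rule summable_comparison_test'[of "\<lambda>n. \<bar>gco n\<bar> * (norm x)^2" 0])
    show "summable (\<lambda>n. \<bar>gco n\<bar> * (norm x)^2)" by (rule summable_mult2[OF gco_abs_summable])
    fix n show "norm (gco n * b n) \<le> \<bar>gco n\<bar> * (norm x)^2"
      using Bn_nonneg[OF S, of n x] Bn_le[OF S, of n x] by (simp add: b_def abs_mult mult_left_mono)
  qed
  have "0 \<le> suminf gco * (norm x)^2" using gco_suminf_nonneg by simp
  also have "\<dots> = (\<Sum>n. gco n * (norm x)^2)" by (rule suminf_mult2[OF gco_summable])
  also have "\<dots> \<le> (\<Sum>n. gco n * b n)"
  proof (rule suminf_le[OF _ summable_mult2[OF gco_summable] sb])
    fix n show "gco n * (norm x)^2 \<le> gco n * b n"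
    proof (cases "n = 0")
      case True then show ?thesis by (simp add: b_def norm_sq_cinner)
    next
      case False
      then show ?thesis using gco_nonpos[of n] Bn_le[OF S, of n x] unfolding b_def
        by (intro mult_left_mono_neg) auto
    qed
  qed
  finally show "0 \<le> Re (cinner (sqrtop S x) x)" unfolding sqrtop_cinner b_def by simp
qed

lemma sqrtop_unique:
  assumes P: "positive_op R'" and sq: "\<And>x. R' (R' x) = x - sqB S x"
  shows "R' = sqrtop S"
proof -
  have R'b: "bounded_op R'" using P by (rule positive_bounded)
  define R where "R = sqrtop S"
  have Rp: "positive_op R" unfolding R_def by (rule sqrtop_positive)
  have Rb: "bounded_op R" using Rp by (rule positive_bounded)
  have Rsq: "R (R x) = x - sqB S x" for x unfolding R_def by (rule sqrtop_sq)
  have c1: "R' (sqB S y) = sqB S (R' y)" for y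
  proof -
    have "sqB S y = y - R' (R' y)" using sq[of y] by simp
    then have "R' (sqB S y) = R' y - R' (R' (R' y))" by (simp add: bounded_op_diff[OF R'b])
    also have "\<dots> = sqB S (R' y)" using sq[of "R' y"] by simp
    finally show ?thesis .
  qed
  have c2: "R' (Bn S n y) = Bn S n (R' y)" for n y
    by (induction n) (simp_all add: c1)
  have c3: "R' (R x) = R (R' x)" for x
  proof -
    have "R' (R x) = (\<Sum>n. R' (gco n *\<^sub>R Bn S n x))"
      unfolding R_def sqrtop_def by (rule bounded_linear.suminf[OF bounded_op_linear[OF R'b] sq_summable[OF S]])
    also have "\<dots> = R (R' x)"
      unfolding R_def sqrtop_def by (simp add: bounded_op_scaleR[OF R'b] c2)
    finally show ?thesis .
  qed
  show ?thesis
  proof (rule ext)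
    fix x
    define y where "y = R x - R' x"
    have "R y + R' y = 0"
      unfolding y_def by (simp add: bounded_op_diff[OF Rb] bounded_op_diff[OF R'b] Rsq sq c3)
    then have "cinner (R y) y + cinner (R' y) y = 0" by (metis cinner_add_left cinner_zero_left)
    then have "Re (cinner (R y) y) + Re (cinner (R' y) y) = 0" by (metis plus_complex.sel(1) zero_complex.sel(1))
    moreover have "0 \<le> Re (cinner (R y) y)" by (rule positive_Re[OF Rp])
    moreover have "0 \<le> Re (cinner (R' y) y)" by (rule positive_Re[OF P])
    ultimately have "Re (cinner (R y) y) = 0" "Re (cinner (R' y) y) = 0" by linarith+
    then have z: "R y = 0" "R' y = 0" using positive_zero[OF Rp] positive_zero[OF P] by blast+
    have "cinner y y = cinner (R x) y - cinner (R' x) y" unfolding y_def by (simp add: cinner_diff_left)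
    also have "\<dots> = cinner x (R y) - cinner x (R' y)"
      by (simp add: positive_selfadj[OF Rp] positive_selfadj[OF P])
    also have "\<dots> = 0" using z by simp
    finally have "y = 0" by simp
    then show "R' x = sqrtop S x" unfolding y_def R_def by simp
  qed
qed

lemma op_sqrt_eq: "op_sqrt (\<lambda>x. x - adj S (S x)) = sqrtop S"
  unfolding op_sqrt_def
proof (rule the_equality)
  show "positive_op (sqrtop S) \<and> sqrtop S \<circ> sqrtop S = (\<lambda>x. x - adj S (S x))"
    using sqrtop_positive sqrtop_sq by (auto simp: sqB_def)
next
  fix R' assume "positive_op R' \<and> R' \<circ> R' = (\<lambda>x. x - adj S (S x))"
  then show "R' = sqrtop S" using sqrtop_unique[of R'] by (metis comp_apply sqB_def)
qed

lemma op_sqrt_props: "positive_op (op_sqrt (\<lambda>x. x - adj S (S x)))"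
  "\<And>x. op_sqrt (\<lambda>x. x - adj S (S x)) (op_sqrt (\<lambda>x. x - adj S (S x)) x) = x - adj S (S x)"
  unfolding op_sqrt_eq using sqrtop_positive sqrtop_sq by (auto simp: sqB_def)

end

lemma range_closure_ker:
  assumes P: "positive_op R" and sq: "\<And>x. R (R x) = A x"
  shows "closure (range R) = perp {x. A x = 0}"
proof -
  have Rb: "bounded_op R" using P by (rule positive_bounded)
  have ker: "{x. A x = 0} = {x. R x = 0}"
  proof (intro set_eqI iffI; simp)
    fix x assume "A x = 0"
    then have "cinner (R (R x)) x = 0" using sq by simp
    then have "cinner (R x) (R x) = 0" by (simp add: positive_selfadj[OF P])
    then show "R x = 0" by simp
  next
    fix x assume "R x = 0" then show "A x = 0" using sq[of x] bounded_op_zero[OF Rb] by simp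
  qed
  have sub: "csubspace (range R)"
    unfolding csubspace_def
  proof (intro conjI ballI allI)
    show "0 \<in> range R" by (rule range_eqI[of _ R 0]) (simp add: bounded_op_zero[OF Rb])
    show "a + b \<in> range R" if "a \<in> range R" "b \<in> range R" for a b
      using that by (auto simp: bounded_op_add[OF Rb, symmetric])
    show "scaleC c a \<in> range R" if "a \<in> range R" for a c
      using that by (auto simp: bounded_op_scaleC[OF Rb, symmetric])
  qed
  show ?thesis unfolding ker
  proof
    have "range R \<subseteq> perp {x. R x = 0}"
      by (auto intro!: perpI simp: positive_selfadj[OF P])
    then show "closure (range R) \<subseteq> perp {x. R x = 0}"
      by (rule closure_minimal) (rule closed_perp)
  next
    show "perp {x. R x = 0} \<subseteq> closure (range R)"
    proof
      fix y assume y: "y \<in> perp {x. R x = 0}"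
      have ex: "\<exists>p\<in>closure (range R). y - p \<in> perp (closure (range R))"
        by (rule proj_exists[OF csubspace_closure[OF sub] closed_closure])
      from ex show "y \<in> closure (range R)"
      proof (rule bexE)
        fix p assume pM: "p \<in> closure (range R)" and q: "y - p \<in> perp (closure (range R))"
        have "cinner (R (y - p)) z = 0" for z
        proof -
          have "R z \<in> closure (range R)" by (rule closure_subset[THEN subsetD]) simp
          then have "cinner (y - p) (R z) = 0" using q by (rule perpD[rotated])
          then show ?thesis by (simp add: positive_selfadj[OF P])
        qed
        then have "R (y - p) = 0" by (rule cinner_eq_zero_all)
        then have "cinner y (y - p) = 0" using y by (auto dest: perpD)
        moreover have "cinner p (y - p) = 0" using q pM by (rule perpD')
        ultimately have "cinner (y - p) (y - p) = 0" by (simp add: cinner_diff_left)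
        then have "y = p" by simp
        then show "y \<in> closure (range R)" using pM by simp
      qed
    qed
  qed
qed

lemma defect_space_eq:
  assumes T: "contraction T"
  shows "defect_space T = perp {x. x - adj T (T x) = 0}"
  unfolding defect_space_def
  by (rule range_closure_ker[OF op_sqrt_props(1)[OF T] op_sqrt_props(2)[OF T]])

lemma defect_space_adj_eq:
  assumes T: "contraction T"
  shows "defect_space_adj T = perp {x. x - T (adj T x) = 0}"
proof -
  have Tb: "bounded_op T" using T unfolding contraction_def by simp
  have TA: "contraction (adj T)" by (rule contraction_adj[OF T])
  have e: "(\<lambda>x. x - T (adj T x)) = (\<lambda>x. x - adj (adj T) (adj T x))" by (simp add: adj_adj[OF Tb])
  show ?thesis unfolding defect_space_adj_def e
    using range_closure_ker[OF op_sqrt_props(1)[OF TA] op_sqrt_props(2)[OF TA]] by (simp add: adj_adj[OF Tb])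
qed

lemma isometric_point:
  assumes T: "contraction T" and n: "norm (T x) = norm x"
  shows "adj T (T x) = x"
proof -
  have Tb: "bounded_op T" using T unfolding contraction_def by simp
  define R where "R = op_sqrt (\<lambda>x. x - adj T (T x))"
  have P: "positive_op R" unfolding R_def by (rule op_sqrt_props(1)[OF T])
  have sq: "R (R y) = y - adj T (T y)" for y unfolding R_def by (rule op_sqrt_props(2)[OF T])
  have "cinner (R (R x)) x = cinner x x - cinner (T x) (T x)"
    by (simp add: sq cinner_diff_left adj_char2[OF Tb])
  also have "\<dots> = 0" using n by (simp add: cinner_self_norm)
  finally have "cinner (R x) (R x) = 0" by (simp add: positive_selfadj[OF P])
  then have "R x = 0" by simp
  then have "x - adj T (T x) = 0" using sq[of x] bounded_op_zero[OF positive_bounded[OF P]] by simp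
  then show ?thesis by simp
qed

lemma bounded_linear_scaleC_left: "bounded_linear (\<lambda>c. scaleC c (v::'a::chilbert))"
proof
  fix c d :: complex and r :: real
  show "scaleC (c + d) v = scaleC c v + scaleC d v" by (rule scaleC_add_left)
  show "scaleC (r *\<^sub>R c) v = r *\<^sub>R scaleC c v"
    by (metis scaleC_scaleC scaleC_of_real scaleR_conv_of_real)
  show "\<exists>K. \<forall>c. norm (scaleC c v) \<le> norm c * K"
    by (rule exI[of _ "norm v"]) (simp add: norm_scaleC)
qed

lemma continuous_on_scaleC_left[continuous_intros]:
  "continuous_on S f \<Longrightarrow> continuous_on S (\<lambda>x. scaleC (f x) (v::'a::chilbert))"
  by (rule bounded_linear.continuous_on[OF bounded_linear_scaleC_left])

lemma perp_antimono: "A \<subseteq> B \<Longrightarrow> perp B \<subseteq> perp A"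
  unfolding perp_def by auto

lemma perp_closure: "perp (closure M) = perp (M::'a::chilbert set)"
proof
  show "perp (closure M) \<subseteq> perp M" by (rule perp_antimono[OF closure_subset])
next
  show "perp M \<subseteq> perp (closure M)"
  proof
    fix x assume x: "x \<in> perp M"
    have cl: "closed {y. cinner x y = 0}"
      by (rule closed_Collect_eq) (intro continuous_intros)+
    have "closure M \<subseteq> {y. cinner x y = 0}"
      by (rule closure_minimal[OF _ cl]) (use x in \<open>auto dest: perpD\<close>)
    then show "x \<in> perp (closure M)" by (auto intro: perpI)
  qed
qed

lemma perp_span: "perp (cvs.span S) = perp (S::'a::chilbert set)"
proof
  show "perp (cvs.span S) \<subseteq> perp S" by (rule perp_antimono[OF cvs.span_superset])
next
  show "perp S \<subseteq> perp (cvs.span S)"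
  proof
    fix x assume x: "x \<in> perp S"
    have sub: "cvs.subspace {y. cinner x y = 0}"
      unfolding cvs.subspace_def by (auto simp: cinner_simps)
    have "cvs.span S \<subseteq> {y. cinner x y = 0}"
      by (rule cvs.span_minimal[OF _ sub]) (use x in \<open>auto dest: perpD\<close>)
    then show "x \<in> perp (cvs.span S)" by (auto intro: perpI)
  qed
qed

lemma span_preimage:
  assumes P: "bounded_op P" and base: "\<And>s. s \<in> A \<Longrightarrow> P s \<in> cvs.span B"
    and z: "z \<in> cvs.span A"
  shows "P z \<in> cvs.span B"
proof -
  have "cvs.subspace {z. P z \<in> cvs.span B}"
    unfolding cvs.subspace_def
    by (auto simp: bounded_op_zero[OF P] bounded_op_add[OF P] bounded_op_scaleC[OF P]
        cvs.span_zero cvs.span_add cvs.span_scale)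
  then show ?thesis using cvs.span_induct[OF z, of "\<lambda>z. P z \<in> cvs.span B"] base by blast
qed

definition Pr :: "(nat \<Rightarrow> 'a::chilbert) \<Rightarrow> nat set \<Rightarrow> 'a \<Rightarrow> 'a" where
  "Pr e I x = (\<Sum>i\<in>I. scaleC (cinner x (e i)) (e i))"

lemma bounded_op_Pr: "bounded_op (Pr e I)"
proof (rule bounded_opI[of _ "\<Sum>i\<in>I. norm (e i) * norm (e i)"])
  fix x y show "Pr e I (x + y) = Pr e I x + Pr e I y"
    unfolding Pr_def by (simp add: cinner_add_left scaleC_add_left sum.distrib)
next
  fix c x show "Pr e I (scaleC c x) = scaleC c (Pr e I x)"
    unfolding Pr_def by (simp add: cinner_scaleC_left scaleC_sum_right scaleC_scaleC)
next
  fix x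
  have "norm (Pr e I x) \<le> (\<Sum>i\<in>I. norm (scaleC (cinner x (e i)) (e i)))"
    unfolding Pr_def by (rule norm_sum)
  also have "\<dots> \<le> (\<Sum>i\<in>I. norm (e i) * norm (e i) * norm x)"
  proof (rule sum_mono)
    fix i
    have "norm (scaleC (cinner x (e i)) (e i)) = cmod (cinner x (e i)) * norm (e i)" by (rule norm_scaleC)
    also have "\<dots> \<le> (norm x * norm (e i)) * norm (e i)"
      by (rule mult_right_mono[OF cinner_cauchy_schwarz]) simp
    finally show "norm (scaleC (cinner x (e i)) (e i)) \<le> norm (e i) * norm (e i) * norm x"
      by (simp add: mult_ac)
  qed
  also have "\<dots> = (\<Sum>i\<in>I. norm (e i) * norm (e i)) * norm x" by (simp add: sum_distrib_right)
  finally show "norm (Pr e I x) \<le> (\<Sum>i\<in>I. norm (e i) * norm (e i)) * norm x" .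
qed

lemma Pr_span: "Pr e I x \<in> cvs.span (e ` I)"
  unfolding Pr_def by (intro cvs.span_sum cvs.span_scale cvs.span_base) auto

context
  fixes e :: "nat \<Rightarrow> 'a::chilbert"
  assumes on: "\<And>m n. cinner (e m) (e n) = (if m = n then 1 else 0)"
begin

lemma on_inj: "inj e"
proof (rule injI)
  fix m n assume "e m = e n"
  then have "cinner (e m) (e n) = 1" using on[of n n] by simp
  then show "m = n" using on[of m n] by (simp split: if_splits)
qed

lemma on_norm: "norm (e n) = 1"
proof -
  have "complex_of_real ((norm (e n))^2) = 1" using on[of n n] by (simp only: cinner_self_norm[symmetric]) simp
  then have "(norm (e n))^2 = 1" by (simp only: of_real_eq_1_iff)
  then have "norm (e n) = 1 \<or> norm (e n) = - 1" by (simp add: power2_eq_1_iff)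
  moreover have "norm (e n) \<ge> 0" by simp
  ultimately show ?thesis by linarith
qed

lemma on_nonzero: "e n \<noteq> 0"
  using on_norm[of n] by auto

lemma cinner_Pr: assumes "finite I" "j \<in> I" shows "cinner (Pr e I x) (e j) = cinner x (e j)"
proof -
  have "cinner (Pr e I x) (e j) = (\<Sum>i\<in>I. cinner x (e i) * (if i = j then 1 else 0))"
    unfolding Pr_def by (simp add: cinner_sum_left cinner_scaleC_left on)
  also have "\<dots> = cinner x (e j)" using assms by (simp add: if_distrib sum.delta' cong: if_cong)
  finally show ?thesis .
qed

lemma cinner_Pr_out: assumes "j \<notin> I" shows "cinner (Pr e I x) (e j) = 0"
proof -
  have "cinner (Pr e I x) (e j) = (\<Sum>i\<in>I. cinner x (e i) * (if i = j then 1 else 0))"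
    unfolding Pr_def by (simp add: cinner_sum_left cinner_scaleC_left on)
  also have "\<dots> = 0" using assms by (intro sum.neutral) auto
  finally show ?thesis .
qed

lemma perp_Q:
  assumes fin: "finite I"
  shows "perp {x. \<forall>i\<in>I. cinner x (e i) = 0} = cvs.span (e ` I)"
proof
  have sub: "cvs.subspace (perp {x. \<forall>i\<in>I. cinner x (e i) = 0})"
    using csubspace_perp csubspace_iff by blast
  have "e ` I \<subseteq> perp {x. \<forall>i\<in>I. cinner x (e i) = 0}"
    by (auto intro!: perpI) (metis cinner_commute complex_cnj_zero)
  then show sp: "cvs.span (e ` I) \<subseteq> perp {x. \<forall>i\<in>I. cinner x (e i) = 0}"
    by (rule cvs.span_minimal[OF _ sub])
  show "perp {x. \<forall>i\<in>I. cinner x (e i) = 0} \<subseteq> cvs.span (e ` I)"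
  proof
    fix y assume y: "y \<in> perp {x. \<forall>i\<in>I. cinner x (e i) = 0}"
    define z where "z = y - Pr e I y"
    have zQ: "z \<in> {x. \<forall>i\<in>I. cinner x (e i) = 0}"
      unfolding z_def using fin by (simp add: cinner_diff_left cinner_Pr)
    have "cinner y z = 0" using y zQ by (rule perpD)
    moreover have "cinner (Pr e I y) z = 0" using sp Pr_span zQ by (blast dest: perpD)
    ultimately have "cinner z z = 0" by (simp add: z_def cinner_diff_left)
    then have "y = Pr e I y" by (simp add: z_def)
    then show "y \<in> cvs.span (e ` I)" using Pr_span by metis
  qed
qed

lemma Q_perp_span: "{x. \<forall>i\<in>I. cinner x (e i) = 0} = perp (cvs.span (e ` I))"
  unfolding perp_span by (auto simp: perp_def)

lemma norm_sum_on:
  assumes fin: "finite I"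
  shows "(norm (\<Sum>i\<in>I. scaleC (c i) (e i)))^2 = (\<Sum>i\<in>I. (cmod (c i))^2)"
proof -
  have inner: "cinner (e i) (\<Sum>j\<in>I. scaleC (c j) (e j)) = (if i \<in> I then cnj (c i) else 0)" for i
    using fin by (simp add: cinner_sum_right cinner_scaleC_right on if_distrib sum.delta sum.delta' cong: if_cong)
  have "cinner (\<Sum>i\<in>I. scaleC (c i) (e i)) (\<Sum>j\<in>I. scaleC (c j) (e j))
      = (\<Sum>i\<in>I. c i * cinner (e i) (\<Sum>j\<in>I. scaleC (c j) (e j)))"
    by (simp add: cinner_sum_left cinner_scaleC_left)
  also have "\<dots> = (\<Sum>i\<in>I. c i * cnj (c i))" by (intro sum.cong refl) (simp add: inner)
  also have "\<dots> = of_real (\<Sum>i\<in>I. (cmod (c i))^2)"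
    by (simp only: of_real_sum complex_norm_square)
  finally show ?thesis by (simp add: norm_sq_cinner)
qed

lemma onb_zero:
  assumes onb: "orthonormal_basis_nat e" and x: "\<And>n. cinner x (e n) = 0"
  shows "x = 0"
proof -
  have "x \<in> perp (range e)" using x by (auto intro!: perpI)
  then have "x \<in> perp (closure (cspan (range e)))" by (simp add: perp_closure cspan_eq perp_span)
  then have "x \<in> perp UNIV" using onb unfolding orthonormal_basis_nat_def by simp
  then have "cinner x x = 0" by (rule perpD) simp
  then show ?thesis by simp
qed

lemma onb_closure_rest:
  assumes onb: "orthonormal_basis_nat e" and fin: "finite I"
    and x: "\<And>i. i \<in> I \<Longrightarrow> cinner x (e i) = 0"
  shows "x \<in> closure (cvs.span (e ` (- I)))"
proof -
  define P where "P z = z - Pr e I z" for z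
  have Pb: "bounded_op P" unfolding P_def[abs_def] by (rule bounded_op_minus_fun[OF bounded_op_id bounded_op_Pr])
  have "P ` cvs.span (range e) \<subseteq> cvs.span (e ` (- I))"
  proof (clarsimp)
    fix z assume z: "z \<in> cvs.span (range e)"
    show "P z \<in> cvs.span (e ` (- I))"
    proof (rule span_preimage[OF Pb _ z])
      fix s assume "s \<in> range e"
      then obtain n where s: "s = e n" by auto
      show "P s \<in> cvs.span (e ` (- I))"
      proof (cases "n \<in> I")
        case True
        have "Pr e I (e n) = (\<Sum>i\<in>I. if i = n then e i else 0)"
          unfolding Pr_def by (intro sum.cong refl) (auto simp: on scaleC_one)
        also have "\<dots> = e n" using True fin by simp
        finally have "Pr e I (e n) = e n" .
        then have "P (e n) = 0" unfolding P_def by simp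
        then show ?thesis using s cvs.span_zero by simp
      next
        case False
        have "Pr e I (e n) = 0" unfolding Pr_def using False by (intro sum.neutral) (auto simp: on)
        then have "P s = e n" unfolding P_def s by simp
        then show ?thesis using False by (auto intro: cvs.span_base)
      qed
    qed
  qed
  then have "P ` closure (cvs.span (range e)) \<subseteq> closure (cvs.span (e ` (- I)))"
    by (intro image_closure_subset bounded_op_continuous[OF Pb] closed_closure)
       (use closure_subset in auto)
  moreover have "x \<in> closure (cvs.span (range e))"
    using onb unfolding orthonormal_basis_nat_def cspan_eq by simp
  moreover have "P x = x" unfolding P_def Pr_def using x by simp
  ultimately show ?thesis by (metis image_eqI subsetD)
qed

end

lemma on_of_onb: "orthonormal_basis_nat e \<Longrightarrow> cinner (e m) (e n) = (if m = n then 1 else 0)"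
  unfolding orthonormal_basis_nat_def by simp

lemma on_independent:
  fixes e :: "nat \<Rightarrow> 'a::chilbert"
  assumes on: "\<And>m n. cinner (e m) (e n) = (if m = n then 1 else (0::complex))"
  shows "cindependent (e ` I)"
  unfolding cindependent_def
proof (intro allI impI ballI)
  fix B c b assume H: "finite B \<and> B \<subseteq> e ` I \<and> (\<Sum>b\<in>B. scaleC (c b) b) = 0" and bB: "b \<in> B"
  then obtain n where bn: "b = e n" by blast
  have ind: "cinner b' (e n) = (if b' = e n then 1 else 0)" if b'B: "b' \<in> B" for b'
  proof -
    obtain m where "b' = e m" using b'B H by blast
    then show ?thesis using on[of m n] on_inj[OF on] by (auto simp: inj_eq)
  qed
  have "0 = cinner (\<Sum>b\<in>B. scaleC (c b) b) (e n)" using H by simp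
  also have "\<dots> = (\<Sum>b'\<in>B. c b' * cinner b' (e n))" by (simp add: cinner_sum_left cinner_scaleC_left)
  also have "\<dots> = (\<Sum>b'\<in>B. if b' = e n then c b' else 0)" by (intro sum.cong refl) (simp add: ind)
  also have "\<dots> = c b" using H bB bn by simp
  finally show "c b = 0" by simp
qed

lemma has_cdim_on_span:
  fixes e :: "nat \<Rightarrow> 'a::chilbert"
  assumes on: "\<And>m n. cinner (e m) (e n) = (if m = n then 1 else (0::complex))" and fin: "finite I"
  shows "has_cdim (cvs.span (e ` I)) (card I)"
  unfolding has_cdim_def
proof (intro exI conjI)
  show "finite (e ` I)" using fin by simp
  show "card (e ` I) = card I" using on_inj[OF on] by (simp add: card_image inj_on_subset)
  show "e ` I \<subseteq> cvs.span (e ` I)" by (rule cvs.span_superset)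
  show "cindependent (e ` I)" by (rule on_independent[OF on])
  show "cspan (e ` I) = cvs.span (e ` I)" by (rule cspan_eq)
qed

context
  fixes T :: "'a::chilbert \<Rightarrow> 'a" and e :: "nat \<Rightarrow> 'a" and \<alpha> :: "nat \<Rightarrow> complex" and k :: nat
  assumes Tb: "bounded_op T" and k1: "k \<ge> 1" and onb: "orthonormal_basis_nat e"
    and asum: "(\<Sum>i\<le>k. (cmod (\<alpha> i))\<^sup>2) < 1"
    and Te: "\<forall>n. T (e n) = e (n + k)
                 + (if n = 0 then (\<Sum>i<k. scaleC (\<alpha> i) (e i)) + scaleC (\<alpha> k - 1) (e k) else 0)"
begin

lemma on: "cinner (e m) (e n) = (if m = n then 1 else 0)"
  by (rule on_of_onb[OF onb])

lemma Ten: "n \<ge> 1 \<Longrightarrow> T (e n) = e (n + k)"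
  using Te by auto

lemma Te0: "T (e 0) = (\<Sum>i\<le>k. scaleC (\<alpha> i) (e i))"
proof -
  have "T (e 0) = e k + ((\<Sum>i<k. scaleC (\<alpha> i) (e i)) + scaleC (\<alpha> k - 1) (e k))" using Te by simp
  also have "\<dots> = (\<Sum>i<k. scaleC (\<alpha> i) (e i)) + scaleC (\<alpha> k) (e k)"
    by (simp add: scaleC_diff_left scaleC_one)
  also have "\<dots> = (\<Sum>i\<le>k. scaleC (\<alpha> i) (e i))" by (simp add: lessThan_Suc_atMost[symmetric])
  finally show ?thesis .
qed

abbreviation "a \<equiv> T (e 0)"

lemma cinner_a: "cinner x a = (\<Sum>i\<le>k. cnj (\<alpha> i) * cinner x (e i))"
  unfolding Te0 by (simp add: cinner_sum_right cinner_scaleC_right)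

lemma cinner_e_a: "i \<le> k \<Longrightarrow> cinner (e i) a = cnj (\<alpha> i)"
  unfolding cinner_a by (simp add: on if_distrib sum.delta cong: if_cong)

lemma norm_a: "(norm a)^2 = (\<Sum>i\<le>k. (cmod (\<alpha> i))^2)"
  unfolding Te0 by (rule norm_sum_on[OF on]) simp

lemma iso_span:
  assumes z: "z \<in> cvs.span (e ` (- {0}))" and w: "w \<in> cvs.span (e ` (- {0}))"
  shows "cinner (T z) (T w) = cinner z w"
proof -
  have base: "cinner (T (e n)) (T w) = cinner (e n) w" if n: "n \<noteq> 0" and w: "w \<in> cvs.span (e ` (- {0}))" for n w
  proof (rule cvs.span_induct[OF w, of "\<lambda>w. cinner (T (e n)) (T w) = cinner (e n) w"])
    show "cvs.subspace {w. cinner (T (e n)) (T w) = cinner (e n) w}"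
      unfolding cvs.subspace_def
      by (auto simp: bounded_op_zero[OF Tb] bounded_op_add[OF Tb] bounded_op_scaleC[OF Tb] cinner_simps)
  next
    fix s assume "s \<in> e ` (- {0})"
    then obtain m where s: "s = e m" "m \<noteq> 0" by auto
    show "cinner (T (e n)) (T s) = cinner (e n) s"
      using n s by (simp add: Ten on)
  qed
  have "\<forall>w \<in> cvs.span (e ` (- {0})). cinner (T z) (T w) = cinner z w"
  proof (rule cvs.span_induct[OF z, of "\<lambda>z. \<forall>w \<in> cvs.span (e ` (- {0})). cinner (T z) (T w) = cinner z w"])
    show "cvs.subspace {z. \<forall>w\<in>cvs.span (e ` (- {0})). cinner (T z) (T w) = cinner z w}"
      unfolding cvs.subspace_def
      by (auto simp: bounded_op_zero[OF Tb] bounded_op_add[OF Tb] bounded_op_scaleC[OF Tb] cinner_simps)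
  next
    fix s assume "s \<in> e ` (- {0})"
    then obtain n where s: "s = e n" "n \<noteq> 0" by auto
    show "\<forall>w\<in>cvs.span (e ` (- {0})). cinner (T s) (T w) = cinner s w"
      using base s by auto
  qed
  then show ?thesis using w by blast
qed

lemma perp_span_T:
  assumes z: "z \<in> cvs.span (e ` (- {0}))" and i: "i \<le> k"
  shows "cinner (T z) (e i) = 0"
proof (rule cvs.span_induct[OF z, of "\<lambda>z. cinner (T z) (e i) = 0"])
  show "cvs.subspace {z. cinner (T z) (e i) = 0}"
    unfolding cvs.subspace_def
    by (auto simp: bounded_op_zero[OF Tb] bounded_op_add[OF Tb] bounded_op_scaleC[OF Tb] cinner_simps)
next
  fix s assume "s \<in> e ` (- {0})"
  then obtain n where s: "s = e n" "n \<noteq> 0" by auto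
  then show "cinner (T s) (e i) = 0" using i by (simp add: Ten on)
qed

lemma Q0_closure: "cinner y (e 0) = 0 \<Longrightarrow> y \<in> closure (cvs.span (e ` (- {0})))"
  by (rule onb_closure_rest[OF on onb]) auto

lemma Q0_iso: assumes y: "cinner y (e 0) = 0" shows "cinner (T y) (T y) = cinner y y"
proof -
  have cl: "closed {z. cinner (T z) (T z) = cinner z z}"
    by (rule closed_Collect_eq) (intro continuous_intros bounded_op_continuous[OF Tb])+
  have "closure (cvs.span (e ` (- {0}))) \<subseteq> {z. cinner (T z) (T z) = cinner z z}"
    by (rule closure_minimal[OF _ cl]) (auto intro: iso_span)
  then show ?thesis using Q0_closure[OF y] by blast
qed

lemma Q0_perp: assumes y: "cinner y (e 0) = 0" and i: "i \<le> k" shows "cinner (T y) (e i) = 0"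
proof -
  have cl: "closed {z. cinner (T z) (e i) = 0}"
    by (rule closed_Collect_eq) (intro continuous_intros bounded_op_continuous[OF Tb])+
  have "closure (cvs.span (e ` (- {0}))) \<subseteq> {z. cinner (T z) (e i) = 0}"
    by (rule closure_minimal[OF _ cl]) (auto intro: perp_span_T[OF _ i])
  then show ?thesis using Q0_closure[OF y] by blast
qed

lemma norm_T_sq: "(norm (T x))^2 = (norm x)^2 - (1 - (norm a)^2) * (cmod (cinner x (e 0)))^2"
proof -
  define c where "c = cinner x (e 0)"
  define y where "y = x - scaleC c (e 0)"
  have y0: "cinner y (e 0) = 0" unfolding y_def c_def by (simp add: cinner_simps on)
  have xy: "x = scaleC c (e 0) + y" unfolding y_def by simp
  have Tx: "T x = scaleC c a + T y" unfolding xy by (simp add: bounded_op_add[OF Tb] bounded_op_scaleC[OF Tb])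
  have Tya: "cinner (T y) a = 0" unfolding cinner_a using Q0_perp[OF y0] by simp
  have "cinner (scaleC c a) (T y) = 0" using Tya
    by (simp add: cinner_scaleC_left) (metis cinner_commute complex_cnj_zero)
  then have "(norm (T x))^2 = (norm (scaleC c a))^2 + (norm (T y))^2" unfolding Tx by (rule pythagoras)
  also have "(norm (T y))^2 = (norm y)^2" using Q0_iso[OF y0] by (simp add: norm_sq_cinner)
  also have "cinner (scaleC c (e 0)) y = 0" using y0
    by (simp add: cinner_scaleC_left) (metis cinner_commute complex_cnj_zero)
  then have "(norm x)^2 = (norm (scaleC c (e 0)))^2 + (norm y)^2" unfolding xy by (rule pythagoras)
  then have "(norm y)^2 = (norm x)^2 - (cmod c)^2" by (simp add: norm_scaleC on_norm[OF on])
  finally show ?thesis by (simp add: norm_scaleC power_mult_distrib c_def algebra_simps)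
qed

lemma na1: "(norm a)^2 < 1" using norm_a asum by simp

lemma T_contraction: "contraction T"
  unfolding contraction_def
proof (intro conjI allI Tb)
  fix x
  have "0 \<le> (1 - (norm a)^2) * (cmod (cinner x (e 0)))^2" using na1 by simp
  then have "(norm (T x))^2 \<le> (norm x)^2" using norm_T_sq[of x] by linarith
  then show "norm (T x) \<le> norm x" by (rule power2_le_imp_le) simp
qed

lemma K1_eq: "{x. x - adj T (T x) = 0} = {x. cinner x (e 0) = 0}"
proof (intro set_eqI iffI; simp)
  fix x assume "x = adj T (T x)"
  then have "cinner (T x) (T x) = cinner x x" by (metis adj_char[OF Tb])
  then have "(norm (T x))^2 = (norm x)^2" by (simp add: norm_sq_cinner)
  then have "(1 - (norm a)^2) * (cmod (cinner x (e 0)))^2 = 0" using norm_T_sq[of x] by linarith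
  then show "cinner x (e 0) = 0" using na1 by simp
next
  fix x assume "cinner x (e 0) = 0"
  then have "(norm (T x))^2 = (norm x)^2" using norm_T_sq[of x] by simp
  then have "norm (T x) = norm x" by (simp add: power2_eq_iff_nonneg)
  then show "x = adj T (T x)" using isometric_point[OF T_contraction] by simp
qed

lemma adj_e: assumes i: "i \<le> k" shows "adj T (e i) = scaleC (cnj (\<alpha> i)) (e 0)"
proof -
  have "adj T (e i) - scaleC (cnj (\<alpha> i)) (e 0) = 0"
  proof (rule onb_zero[OF on onb])
    fix n
    show "cinner (adj T (e i) - scaleC (cnj (\<alpha> i)) (e 0)) (e n) = 0"
    proof (cases "n = 0")
      case True then show ?thesis using i by (simp add: cinner_diff_left adj_char2[OF Tb] cinner_e_a cinner_scaleC_left on)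
    next
      case False
      then have "T (e n) = e (n + k)" by (simp add: Ten)
      then show ?thesis using False i by (simp add: cinner_diff_left adj_char2[OF Tb] cinner_scaleC_left on)
    qed
  qed
  then show ?thesis by simp
qed

lemma K2_eq: "{x. x - T (adj T x) = 0} = {x. \<forall>i\<in>{..k}. cinner x (e i) = 0}"
proof (intro set_eqI iffI)
  fix x assume "x \<in> {x. x - T (adj T x) = 0}"
  then have x: "T (adj T x) = x" by simp
  define s where "s = cinner x a"
  have xi: "cinner x (e i) = \<alpha> i * s" if i: "i \<le> k" for i
  proof -
    have "cinner x (e i) = cinner (T (adj T x)) (e i)" using x by simp
    also have "\<dots> = cinner (adj T x) (adj T (e i))" by (rule adj_char[OF Tb])
    also have "\<dots> = \<alpha> i * cinner (adj T x) (e 0)" using i by (simp add: adj_e cinner_scaleC_right)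
    also have "cinner (adj T x) (e 0) = s" unfolding s_def by (rule adj_char2[OF Tb])
    finally show ?thesis .
  qed
  have "s = (\<Sum>i\<le>k. cnj (\<alpha> i) * cinner x (e i))" unfolding s_def by (rule cinner_a)
  also have "\<dots> = (\<Sum>i\<le>k. cnj (\<alpha> i) * (\<alpha> i * s))"
    by (intro sum.cong refl) (simp add: xi)
  also have "\<dots> = (\<Sum>i\<le>k. of_real ((cmod (\<alpha> i))^2) * s)"
    by (intro sum.cong refl, subst complex_norm_square) (simp add: mult_ac)
  also have "\<dots> = of_real (\<Sum>i\<le>k. (cmod (\<alpha> i))^2) * s"
    by (simp only: sum_distrib_right[symmetric] of_real_sum)
  finally have "(1 - of_real (\<Sum>i\<le>k. (cmod (\<alpha> i))^2)) * s = 0" by (simp add: algebra_simps)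
  moreover have "1 - complex_of_real (\<Sum>i\<le>k. (cmod (\<alpha> i))^2) \<noteq> 0"
  proof
    assume "1 - complex_of_real (\<Sum>i\<le>k. (cmod (\<alpha> i))^2) = 0"
    then have "(\<Sum>i\<le>k. (cmod (\<alpha> i))^2) = 1" by (metis eq_iff_diff_eq_0 of_real_eq_1_iff)
    then show False using asum by simp
  qed
  ultimately have "s = 0" by simp
  then show "x \<in> {x. \<forall>i\<in>{..k}. cinner x (e i) = 0}" using xi by simp
next
  fix x assume x: "x \<in> {x. \<forall>i\<in>{..k}. cinner x (e i) = 0}"
  have xc: "x \<in> closure (cvs.span (e ` (- {..k})))"
    by (rule onb_closure_rest[OF on onb]) (use x in auto)
  have TA: "bounded_op (\<lambda>z. T (adj T z))" by (rule bounded_op_comp[OF Tb adj_bounded[OF Tb]])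
  have cl: "closed {z. T (adj T z) = z}"
    by (rule closed_Collect_eq) (intro continuous_intros bounded_op_continuous[OF TA])+
  have "cvs.span (e ` (- {..k})) \<subseteq> {z. T (adj T z) = z}"
  proof
    fix z assume z: "z \<in> cvs.span (e ` (- {..k}))"
    have "T (adj T z) = z"
    proof (rule cvs.span_induct[OF z, of "\<lambda>z. T (adj T z) = z"])
      show "cvs.subspace {z. T (adj T z) = z}"
        unfolding cvs.subspace_def
        by (auto simp: bounded_op_zero[OF TA] bounded_op_add[OF TA] bounded_op_scaleC[OF TA])
    next
      fix s assume "s \<in> e ` (- {..k})"
      then obtain m where s: "s = e m" "m > k" by auto
      define j where "j = m - k"
      have j: "j \<ge> 1" "m = j + k" using s k1 unfolding j_def by auto
      have em: "e m = T (e j)" using j by (simp add: Ten)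
      have "cinner (e j) (e 0) = 0" using j by (simp add: on)
      then have "e j \<in> {x. x - adj T (T x) = 0}" unfolding K1_eq by simp
      then have "adj T (T (e j)) = e j" by simp
      then show "T (adj T s) = s" using s em by simp
    qed
    then show "z \<in> {z. T (adj T z) = z}" by simp
  qed
  then have "closure (cvs.span (e ` (- {..k}))) \<subseteq> {z. T (adj T z) = z}" by (rule closure_minimal[OF _ cl])
  then show "x \<in> {x. x - T (adj T x) = 0}" using xc by auto
qed

lemma defect_T: "defect_space T = cvs.span (e ` {0})"
proof -
  have "defect_space T = perp {x. \<forall>i\<in>{0}. cinner x (e i) = 0}"
    using defect_space_eq[OF T_contraction] K1_eq by simp
  also have "\<dots> = cvs.span (e ` {0})" by (rule perp_Q[OF on]) simp
  finally show ?thesis .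
qed

lemma defect_T_adj: "defect_space_adj T = cvs.span (e ` {..k})"
proof -
  have "defect_space_adj T = perp {x. \<forall>i\<in>{..k}. cinner x (e i) = 0}"
    using defect_space_adj_eq[OF T_contraction] K2_eq by simp
  also have "\<dots> = cvs.span (e ` {..k})" by (rule perp_Q[OF on]) simp
  finally show ?thesis .
qed

lemma T_cnu: "completely_non_unitary T"
  unfolding completely_non_unitary_def
proof (intro conjI T_contraction notI)
  assume "\<exists>M. reducing_subspace T M \<and> M \<noteq> {0} \<and> unitary_on T M"
  then obtain M where red: "reducing_subspace T M" and M0: "M \<noteq> {0}" and un: "unitary_on T M" by blast
  have sub: "csubspace M" and TM: "T ` M \<subseteq> M" and AM: "adj T ` M \<subseteq> M"
    using red unfolding reducing_subspace_def by auto
  have iso: "\<And>x. x \<in> M \<Longrightarrow> norm (T x) = norm x" and onto: "T ` M = M"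
    using un unfolding unitary_on_def by auto
  have K1: "adj T (T x) = x" if "x \<in> M" for x
    by (rule isometric_point[OF T_contraction iso[OF that]])
  have K2: "T (adj T x) = x" if x: "x \<in> M" for x
  proof -
    obtain y where y: "y \<in> M" "x = T y" using onto x by blast
    then show ?thesis using K1[OF y(1)] by simp
  qed
  have QV: "cinner x (e i) = 0" if "x \<in> M" "i \<le> k" for x i
    using K2[OF that(1)] K2_eq that(2) by auto
  have all: "\<forall>x\<in>M. cinner x (e n) = 0" for n
  proof (induction n rule: less_induct)
    case (less n)
    show ?case
    proof (cases "n \<le> k")
      case True then show ?thesis using QV by blast
    next
      case False
      define j where "j = n - k"
      have j: "j \<ge> 1" "n = j + k" "j < n" using False k1 unfolding j_def by auto
      show ?thesis
      proof
        fix x assume x: "x \<in> M"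
        have "cinner x (e n) = cinner x (T (e j))" using j by (simp add: Ten)
        also have "\<dots> = cinner (adj T x) (e j)" by (rule adj_char2[OF Tb, symmetric])
        also have "\<dots> = 0" using less.IH[OF j(3)] AM x by blast
        finally show "cinner x (e n) = 0" .
      qed
    qed
  qed
  have "M \<subseteq> {0}" using all onb_zero[OF on onb] by blast
  moreover have "0 \<in> M" using sub unfolding csubspace_def by simp
  ultimately show False using M0 by blast
qed

lemma backward_main:
  "contraction T \<and> completely_non_unitary T \<and> defect_space T \<subseteq> defect_space_adj T
    \<and> has_cdim (defect_space T) 1 \<and> has_cdim (defect_space_adj T) (k + 1)"
proof (intro conjI T_contraction T_cnu)
  show "defect_space T \<subseteq> defect_space_adj T"
    unfolding defect_T defect_T_adj by (rule cvs.span_mono) auto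
  show "has_cdim (defect_space T) 1"
    unfolding defect_T using has_cdim_on_span[OF on, of "{0}"] by simp
  show "has_cdim (defect_space_adj T) (k + 1)"
    unfolding defect_T_adj using has_cdim_on_span[OF on, of "{..k}"] by simp
qed

end

section \<open>Gram-Schmidt\<close>

lemma gram_schmidt:
  fixes B :: "'a::chilbert set"
  assumes "finite B" "cvs.independent B"
  shows "\<exists>f. (\<forall>i<card B. \<forall>j<card B. cinner (f i) (f j) = (if i = j then 1 else 0))
              \<and> cvs.span (f ` {..<card B}) = cvs.span B"
  using assms
proof (induction B rule: finite_induct)
  case empty then show ?case by simp
next
  case (insert b B)
  have indB: "cvs.independent B" and bB: "b \<notin> cvs.span B"
    using insert.prems insert.hyps cvs.independent_insert[of b B] by auto
  obtain f where fo: "\<forall>i<card B. \<forall>j<card B. cinner (f i) (f j) = (if i = j then 1 else 0)"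
    and fs: "cvs.span (f ` {..<card B}) = cvs.span B"
    using insert.IH[OF indB] by blast
  define n where "n = card B"
  define A where "A = f ` {..<n}"
  define s where "s = (\<Sum>i<n. scaleC (cinner b (f i)) (f i))"
  define w where "w = b - s"
  have sA: "s \<in> cvs.span A" unfolding s_def A_def
    by (intro cvs.span_sum cvs.span_scale cvs.span_base) auto
  have w0: "w \<noteq> 0"
  proof
    assume "w = 0"
    then have "b = s" unfolding w_def by simp
    then have "b \<in> cvs.span B" using sA fs unfolding A_def n_def by simp
    then show False using bB by simp
  qed
  have nw: "norm w > 0" using w0 by simp
  define u where "u = scaleC (complex_of_real (1 / norm w)) w"
  define f' where "f' = f(n := u)"
  have wf: "cinner w (f j) = 0" if "j < n" for j
  proof -
    have "cinner s (f j) = (\<Sum>i<n. cinner b (f i) * (if i = j then 1 else 0))"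
      unfolding s_def using fo that by (simp add: cinner_sum_left cinner_scaleC_left n_def)
    also have "\<dots> = cinner b (f j)" using that by (simp add: if_distrib sum.delta' cong: if_cong)
    finally show ?thesis unfolding w_def by (simp add: cinner_diff_left)
  qed
  have uf: "cinner u (f j) = 0" if "j < n" for j
    unfolding u_def using wf[OF that] by (simp add: cinner_scaleC_left)
  have uu: "cinner u u = 1"
  proof -
    have "cmod (complex_of_real (1 / norm w)) = 1 / norm w" using nw by (simp only: norm_of_real) simp
    then have "norm u = 1" unfolding u_def using nw by (simp add: norm_scaleC)
    then show ?thesis by (simp add: cinner_self_norm)
  qed
  have card: "card (insert b B) = Suc n" using insert.hyps unfolding n_def by simp
  have img: "f' ` {..<Suc n} = insert u A"
    unfolding f'_def A_def by (auto simp: lessThan_Suc image_def)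
  show ?case unfolding card
  proof (intro exI conjI allI impI)
    fix i j assume i: "i < Suc n" and j: "j < Suc n"
    show "cinner (f' i) (f' j) = (if i = j then 1 else 0)"
    proof (cases "i = n"; cases "j = n")
      assume "i = n" "j = n" then show ?thesis using uu by (simp add: f'_def)
    next
      assume "i = n" "j \<noteq> n" then show ?thesis using uf j by (simp add: f'_def)
    next
      assume "i \<noteq> n" "j = n"
      moreover have "cinner (f i) u = 0"
      proof -
        have "i < n" using i \<open>i \<noteq> n\<close> by simp
        then have "cinner u (f i) = 0" by (rule uf)
        then show ?thesis by (metis cinner_commute complex_cnj_zero)
      qed
      ultimately show ?thesis by (simp add: f'_def)
    next
      assume "i \<noteq> n" "j \<noteq> n" then show ?thesis using fo i j by (simp add: f'_def n_def)
    qed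
  next
    show "cvs.span (f' ` {..<Suc n}) = cvs.span (insert b B)"
      unfolding img
    proof (rule cvs.span_eq[THEN iffD2], intro conjI)
      have AB: "cvs.span A = cvs.span B" using fs unfolding A_def n_def .
      have "u \<in> cvs.span (insert b B)"
      proof -
        have "b \<in> cvs.span (insert b B)" by (rule cvs.span_base) simp
        moreover have "s \<in> cvs.span (insert b B)"
          using sA AB cvs.span_mono[of B "insert b B"] by auto
        ultimately have "w \<in> cvs.span (insert b B)" unfolding w_def by (rule cvs.span_diff)
        then show ?thesis unfolding u_def by (rule cvs.span_scale)
      qed
      moreover have "A \<subseteq> cvs.span (insert b B)"
        using AB cvs.span_superset[of A] cvs.span_mono[of B "insert b B"] by auto
      ultimately show "insert u A \<subseteq> cvs.span (insert b B)" by simp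
    next
      have AB: "cvs.span A = cvs.span B" using fs unfolding A_def n_def .
      have "b \<in> cvs.span (insert u A)"
      proof -
        have "w = scaleC (complex_of_real (norm w)) u"
          unfolding u_def using nw by (simp add: scaleC_scaleC flip: of_real_mult)
        then have "w \<in> cvs.span (insert u A)" by (metis cvs.span_base cvs.span_scale insertI1)
        moreover have "s \<in> cvs.span (insert u A)" using sA cvs.span_mono[of A "insert u A"] by auto
        ultimately have "w + s \<in> cvs.span (insert u A)" by (rule cvs.span_add)
        then show ?thesis unfolding w_def by simp
      qed
      moreover have "B \<subseteq> cvs.span (insert u A)"
        using AB cvs.span_superset[of B] cvs.span_mono[of A "insert u A"] by auto
      ultimately show "insert b B \<subseteq> cvs.span (insert u A)" by simp
    qed
  qed
qed

function seqE :: "('a \<Rightarrow> 'a) \<Rightarrow> nat \<Rightarrow> 'a \<Rightarrow> (nat \<Rightarrow> 'a) \<Rightarrow> nat \<Rightarrow> 'a" where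
  "seqE T k d f n = (if n = 0 then d else if n \<le> k \<or> k = 0 then f (n - 1) else T (seqE T k d f (n - k)))"
  by auto
termination by (relation "Wellfounded.measure (\<lambda>(T,k,d,f,n). n)") auto

declare seqE.simps[simp del]

lemma kernel_closed_subspace:
  assumes A: "bounded_op A"
  shows "csubspace {x. A x = 0}" "closed {x. A x = 0}"
proof -
  show "csubspace {x. A x = 0}" unfolding csubspace_def
    by (auto simp: bounded_op_zero[OF A] bounded_op_add[OF A] bounded_op_scaleC[OF A])
  show "closed {x. A x = 0}"
    by (rule closed_Collect_eq) (intro continuous_intros bounded_op_continuous[OF A])+
qed

context
  fixes T :: "'a::chilbert \<Rightarrow> 'a" and k :: nat
  assumes k1: "k \<ge> 1" and Tc: "contraction T" and cnu: "completely_non_unitary T"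
    and dsub: "defect_space T \<subseteq> defect_space_adj T" and d1: "has_cdim (defect_space T) 1"
    and dk: "has_cdim (defect_space_adj T) (k + 1)"
begin

lemma Tb: "bounded_op T" using Tc unfolding contraction_def by simp

abbreviation "K1 \<equiv> {x. x - adj T (T x) = 0}"
abbreviation "K2 \<equiv> {x. x - T (adj T x) = 0}"
abbreviation "V \<equiv> perp K2"

lemma A1b: "bounded_op (\<lambda>x. x - adj T (T x))"
  by (rule bounded_op_minus_fun[OF bounded_op_id bounded_op_comp[OF adj_bounded[OF Tb] Tb]])
lemma A2b: "bounded_op (\<lambda>x. x - T (adj T x))"
  by (rule bounded_op_minus_fun[OF bounded_op_id bounded_op_comp[OF Tb adj_bounded[OF Tb]]])

lemma K1_cs: "csubspace K1" "closed K1" using kernel_closed_subspace[OF A1b] by auto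
lemma K2_cs: "csubspace K2" "closed K2" using kernel_closed_subspace[OF A2b] by auto

lemma perpV: "perp V = K2" by (rule perp_perp[OF K2_cs])

lemma V_sub: "cvs.subspace V" using csubspace_perp csubspace_iff by blast

lemma exists_d: "\<exists>d. norm d = 1 \<and> d \<in> V \<and> (\<forall>x. x \<in> K1 \<longleftrightarrow> cinner x d = 0)"
proof -
  obtain B where B: "finite B" "card B = 1" "B \<subseteq> perp K1" "cindependent B" "cspan B = perp K1"
    using d1 unfolding has_cdim_def defect_space_eq[OF Tc] by blast
  then obtain b where Bb: "B = {b}" by (meson card_1_singletonE)
  have b0: "b \<noteq> 0"
  proof
    assume "b = 0"
    then have "(\<Sum>x\<in>{b}. scaleC 1 x) = 0" by simp
    note z = this
    have H: "\<forall>B' c. finite B' \<and> B' \<subseteq> B \<and> (\<Sum>b\<in>B'. scaleC (c b) b) = 0 \<longrightarrow> (\<forall>b\<in>B'. c b = 0)"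
      using B(4) unfolding cindependent_def .
    have "(\<lambda>_. 1::complex) b = 0"
      by (rule H[rule_format, of "{b}" "\<lambda>_. 1" b]) (use z Bb in auto)
    then show False by simp
  qed
  define c where "c = complex_of_real (1 / norm b)"
  define d where "d = scaleC c b"
  have nb: "norm b > 0" using b0 by simp
  have "cmod c = 1 / norm b" unfolding c_def using nb by (simp only: norm_of_real) simp
  then have nd: "norm d = 1" unfolding d_def using nb by (simp add: norm_scaleC)
  have dspan: "d \<in> cspan {b}" unfolding d_def cspan_eq by (intro cvs.span_scale cvs.span_base) simp
  then have dD: "d \<in> perp K1" using B(5) Bb by simp
  have "d \<in> defect_space_adj T" using dsub dD defect_space_eq[OF Tc] by auto
  then have dV: "d \<in> V" using defect_space_adj_eq[OF Tc] by simp
  have K1eq: "K1 = perp (perp K1)" by (rule perp_perp[OF K1_cs, symmetric])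
  have pk: "perp K1 = cvs.span {b}" using B(5) Bb by (simp only: cspan_eq)
  from K1eq have "K1 = perp (cvs.span {b})" by (simp only: pk)
  then have K1b: "K1 = perp {b}" by (simp only: perp_span)
  have "x \<in> K1 \<longleftrightarrow> cinner x d = 0" for x
  proof -
    have "cinner x d = cnj c * cinner x b" unfolding d_def by (simp add: cinner_scaleC_right)
    moreover have "c \<noteq> 0" unfolding c_def using nb by simp
    ultimately have "cinner x d = 0 \<longleftrightarrow> cinner x b = 0" by simp
    moreover have "x \<in> K1 \<longleftrightarrow> cinner x b = 0" using K1b by (simp add: perp_def)
    ultimately show ?thesis by simp
  qed
  then show ?thesis using nd dV by blast
qed

lemma TK1: assumes "x \<in> K1" shows "T x \<in> K2"
proof -
  have "adj T (T x) = x" using assms by simp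
  then show ?thesis by simp
qed

lemma AK2: assumes "x \<in> K2" shows "adj T x \<in> K1"
proof -
  have "T (adj T x) = x" using assms by simp
  then show ?thesis by simp
qed

lemma iso_K1: assumes "y \<in> K1" shows "cinner (T x) (T y) = cinner x y"
proof -
  have "adj T (T y) = y" using assms by simp
  then show ?thesis by (simp add: adj_char[OF Tb])
qed

lemma dimV: "cvs.dim V = k + 1"
proof -
  obtain B where B: "finite B" "card B = k + 1" "B \<subseteq> V" "cindependent B" "cspan B = V"
    using dk unfolding has_cdim_def defect_space_adj_eq[OF Tc] by blast
  have "cvs.dim V = cvs.dim (cvs.span B)" using B(5) by (simp add: cspan_eq)
  also have "\<dots> = cvs.dim B" by (rule cvs.dim_span)
  also have "\<dots> = card B" using B(4) cindependent_iff cvs.dim_eq_card_independent by blast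
  finally show ?thesis using B(2) by simp
qed

context
  fixes d :: 'a
  assumes nd: "norm d = 1" and dV: "d \<in> V" and K1d: "\<And>x. x \<in> K1 \<longleftrightarrow> cinner x d = 0"
begin

lemma dd: "cinner d d = 1" using nd by (simp add: cinner_self_norm)

abbreviation "U \<equiv> {v \<in> V. cinner v d = 0}"

lemma U_sub: "cvs.subspace U"
  unfolding cvs.subspace_def using V_sub unfolding cvs.subspace_def by (auto simp: cinner_simps)

lemma K2_perp_d: "x \<in> K2 \<Longrightarrow> cinner x d = 0"
  using dV perpV by (metis perpD)

lemma K2_K1': "x \<in> K2 \<Longrightarrow> x \<in> K1"
  using K2_perp_d K1d by blast

lemma V_span: "V = cvs.span (insert d U)"
proof
  show "cvs.span (insert d U) \<subseteq> V" by (rule cvs.span_minimal[OF _ V_sub]) (use dV in auto)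
next
  show "V \<subseteq> cvs.span (insert d U)"
  proof
    fix v assume v: "v \<in> V"
    have "scaleC (cinner v d) d \<in> V" by (rule cvs.subspace_scale[OF V_sub dV])
    then have "v - scaleC (cinner v d) d \<in> V" by (rule cvs.subspace_diff[OF V_sub v])
    moreover have "cinner (v - scaleC (cinner v d) d) d = 0" using dd by (simp add: cinner_simps)
    ultimately have "v - scaleC (cinner v d) d \<in> U" by simp
    then have "v - scaleC (cinner v d) d \<in> cvs.span U" by (rule cvs.span_base)
    then show "v \<in> cvs.span (insert d U)" by (auto simp: cvs.span_breakdown_eq)
  qed
qed

lemma exists_f: "\<exists>f. (\<forall>i<k. \<forall>j<k. cinner (f i) (f j) = (if i = j then 1 else 0)) \<and> cvs.span (f ` {..<k}) = U"
proof -
  obtain BU where BU: "BU \<subseteq> U" "cvs.independent BU" "U \<subseteq> cvs.span BU" "card BU = cvs.dim U"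
    by (rule cvs.basis_exists)
  have spB: "cvs.span BU = U"
    using BU(1,3) U_sub by (metis cvs.span_subspace)
  have dU: "d \<notin> U" using dd by simp
  then have dB: "d \<notin> cvs.span BU" using spB by simp
  have ind2: "cvs.independent (insert d BU)" by (rule cvs.independent_insertI[OF dB BU(2)])
  have "cvs.span (insert d BU) = cvs.span (insert d U)"
  proof (rule cvs.span_eq[THEN iffD2], intro conjI)
    show "insert d BU \<subseteq> cvs.span (insert d U)"
      using BU(1) cvs.span_superset[of "insert d U"] by auto
    show "insert d U \<subseteq> cvs.span (insert d BU)"
      using spB cvs.span_mono[of BU "insert d BU"] cvs.span_superset[of "insert d BU"] by auto
  qed
  then have "cvs.span (insert d BU) = V" using V_span by simp
  then have "cvs.dim V = card (insert d BU)"
    using cvs.dim_span[of "insert d BU"] cvs.dim_eq_card_independent[OF ind2] by simp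
  then have cI: "card (insert d BU) = k + 1" using dimV by simp
  then have finI: "finite (insert d BU)" by (metis card.infinite add_is_0 one_neq_zero)
  then have fin: "finite BU" by simp
  have dBU: "d \<notin> BU" using BU(1) dU by auto
  have cB: "card BU = k" using cI fin dBU by simp
  obtain f where f: "\<forall>i<card BU. \<forall>j<card BU. cinner (f i) (f j) = (if i = j then 1 else 0)"
    "cvs.span (f ` {..<card BU}) = cvs.span BU" using gram_schmidt[OF fin BU(2)] by blast
  show ?thesis using f cB spB by metis
qed

context
  fixes f :: "nat \<Rightarrow> 'a"
  assumes fon: "\<forall>i<k. \<forall>j<k. cinner (f i) (f j) = (if i = j then 1 else 0)"
    and fsp: "cvs.span (f ` {..<k}) = U"
begin

abbreviation "g \<equiv> seqE T k d f"

lemma g0: "g 0 = d" by (subst seqE.simps) simp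

lemma gmid: "1 \<le> n \<Longrightarrow> n \<le> k \<Longrightarrow> g n = f (n - 1)" by (subst seqE.simps) simp

lemma ghigh: "k < n \<Longrightarrow> g n = T (g (n - k))"
  using k1 by (subst seqE.simps) simp

lemma gshift: "1 \<le> n \<Longrightarrow> g (n + k) = T (g n)"
  using ghigh[of "n + k"] by simp

lemma fU: "j < k \<Longrightarrow> f j \<in> U"
  using fsp cvs.span_superset[of "f ` {..<k}"] by auto

lemma g_K: "(1 \<le> n \<longrightarrow> g n \<in> K1) \<and> (k < n \<longrightarrow> g n \<in> K2)"
proof (induction n rule: less_induct)
  case (less n)
  show ?case
  proof (cases "n \<le> k")
    case True
    have "1 \<le> n \<Longrightarrow> g n \<in> K1"
    proof -
      assume n1: "1 \<le> n"
      have "g n = f (n - 1)" by (rule gmid[OF n1 True])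
      moreover have "f (n - 1) \<in> U" using True n1 by (intro fU) simp
      ultimately show "g n \<in> K1" using K1d by simp
    qed
    then show ?thesis using True by simp
  next
    case False
    have lt: "n - k < n" "1 \<le> n - k" using False k1 by auto
    have "g (n - k) \<in> K1" using less.IH[OF lt(1)] lt(2) by blast
    then have "T (g (n - k)) \<in> K2" by (rule TK1)
    then have "g n \<in> K2" using ghigh False by simp
    then show ?thesis using K2_K1' by blast
  qed
qed

lemma g_K1: "1 \<le> n \<Longrightarrow> g n \<in> K1" using g_K by blast
lemma g_K2: "k < n \<Longrightarrow> g n \<in> K2" using g_K by blast

lemma g_V: "n \<le> k \<Longrightarrow> g n \<in> V"
proof (cases "n = 0")
  case True then show ?thesis using g0 dV by simp
next
  case False
  assume "n \<le> k"
  then show ?thesis using gmid[of n] False fU[of "n - 1"] by simp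
qed

lemma g_img: "g ` {..k} = insert d (f ` {..<k})"
proof
  show "g ` {..k} \<subseteq> insert d (f ` {..<k})"
  proof
    fix y assume "y \<in> g ` {..k}"
    then obtain n where n: "n \<le> k" "y = g n" by auto
    show "y \<in> insert d (f ` {..<k})"
    proof (cases "n = 0")
      case True then show ?thesis using n g0 by simp
    next
      case False then show ?thesis using n gmid[of n] by auto
    qed
  qed
next
  show "insert d (f ` {..<k}) \<subseteq> g ` {..k}"
  proof
    fix y assume "y \<in> insert d (f ` {..<k})"
    then consider "y = d" | j where "j < k" "y = f j" by auto
    then show "y \<in> g ` {..k}"
    proof cases
      case 1 then show ?thesis using g0 by (metis atMost_iff image_eqI le0)
    next
      case 2
      have "g (Suc j) = f j" using gmid[of "Suc j"] 2 by simp
      then show ?thesis using 2 by (metis Suc_leI atMost_iff image_eqI)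
    qed
  qed
qed

lemma V_g: "V = cvs.span (g ` {..k})"
proof -
  have "cvs.span (insert d (f ` {..<k})) = cvs.span (insert d U)"
  proof (rule cvs.span_eq[THEN iffD2], intro conjI)
    show "insert d (f ` {..<k}) \<subseteq> cvs.span (insert d U)"
      using fU cvs.span_superset[of "insert d U"] by auto
    show "insert d U \<subseteq> cvs.span (insert d (f ` {..<k}))"
      using fsp cvs.span_mono[of "f ` {..<k}" "insert d (f ` {..<k})"]
        cvs.span_superset[of "insert d (f ` {..<k})"] by auto
  qed
  then show ?thesis using V_span g_img by simp
qed

lemma gV_perp: "k < n \<Longrightarrow> g n \<in> perp V"
  using g_K2 perpV by simp

lemma g_on: "cinner (g m) (g n) = (if m = n then 1 else 0)"
proof (induction m arbitrary: n rule: less_induct)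
  case (less m)
  show ?case
  proof (cases "m \<le> k"; cases "n \<le> k")
    assume m: "m \<le> k" and n: "n \<le> k"
    show ?thesis
    proof (cases "m = 0"; cases "n = 0")
      assume "m = 0" "n = 0" then show ?thesis using g0 dd by simp
    next
      assume m0: "m = 0" and n0: "n \<noteq> 0"
      have "cinner (f (n - 1)) d = 0" using fU[of "n - 1"] n n0 by simp
      then have "cinner d (f (n - 1)) = 0" by (metis cinner_commute complex_cnj_zero)
      then show ?thesis using m0 n0 g0 gmid[of n] n by simp
    next
      assume m0: "m \<noteq> 0" and n0: "n = 0"
      have "cinner (f (m - 1)) d = 0" using fU[of "m - 1"] m m0 by simp
      then show ?thesis using m0 n0 g0 gmid[of m] m by simp
    next
      assume m0: "m \<noteq> 0" and n0: "n \<noteq> 0"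
      have "cinner (f (m - 1)) (f (n - 1)) = (if m - 1 = n - 1 then 1 else 0)"
        using fon m n m0 n0 by simp
      then show ?thesis using m0 n0 gmid[of m] gmid[of n] m n by auto
    qed
  next
    assume m: "m \<le> k" and n: "\<not> n \<le> k"
    have "cinner (g m) (g n) = 0" using gV_perp[of n] g_V[OF m] n by (auto intro: perpD')
    then show ?thesis using m n by auto
  next
    assume m: "\<not> m \<le> k" and n: "n \<le> k"
    have "cinner (g m) (g n) = 0" using gV_perp[of m] g_V[OF n] m by (auto intro: perpD)
    then show ?thesis using m n by auto
  next
    assume m: "\<not> m \<le> k" and n: "\<not> n \<le> k"
    have lt: "m - k < m" using m k1 by simp
    have "cinner (g m) (g n) = cinner (T (g (m - k))) (T (g (n - k)))"
      using ghigh m n by simp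
    also have "\<dots> = cinner (g (m - k)) (g (n - k))"
      by (rule iso_K1[OF g_K1]) (use n in simp)
    also have "\<dots> = (if m - k = n - k then 1 else 0)" by (rule less.IH[OF lt])
    also have "\<dots> = (if m = n then 1 else 0)" using m n by auto
    finally show ?thesis .
  qed
qed

lemma Td_V: "T d \<in> V"
proof (rule perpI)
  fix w assume w: "w \<in> K2"
  have "cinner (T d) w = cinner d (adj T w)" by (rule adj_char[OF Tb])
  moreover have "cinner (adj T w) d = 0" using AK2[OF w] K1d by simp
  ultimately show "cinner (T d) w = 0" by (metis cinner_commute complex_cnj_zero)
qed

lemma g_onb: "orthonormal_basis_nat g"
  unfolding orthonormal_basis_nat_def
proof (intro conjI allI g_on)
  define N where "N = perp (range g)"
  have Nsub: "csubspace N" "closed N" unfolding N_def by (rule csubspace_perp, rule closed_perp)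
  have NK2: "x \<in> K2" if x: "x \<in> N" for x
  proof -
    have "x \<in> perp (g ` {..k})" using x unfolding N_def by (auto simp: perp_def)
    then have "x \<in> perp V" using V_g perp_span by metis
    then show ?thesis using perpV by simp
  qed
  have NK1: "x \<in> K1" if "x \<in> N" for x using K2_K1'[OF NK2[OF that]] .
  have TN: "T x \<in> N" if x: "x \<in> N" for x
    unfolding N_def
  proof (rule perpI)
    fix y assume "y \<in> range g"
    then obtain n where y: "y = g n" by auto
    show "cinner (T x) y = 0"
    proof (cases "n \<le> k")
      case True
      have "T x \<in> perp V" using TK1[OF NK1[OF x]] perpV by simp
      then show ?thesis using g_V[OF True] y by (auto dest: perpD)
    next
      case False
      then have "y = T (g (n - k))" using y ghigh by simp
      moreover have "g (n - k) \<in> K1" using False by (intro g_K1) simp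
      ultimately have "cinner (T x) y = cinner x (g (n - k))" by (simp add: iso_K1)
      also have "\<dots> = 0" using x unfolding N_def by (auto dest: perpD)
      finally show ?thesis .
    qed
  qed
  have AN: "adj T x \<in> N" if x: "x \<in> N" for x
    unfolding N_def
  proof (rule perpI)
    fix y assume "y \<in> range g"
    then obtain n where y: "y = g n" by auto
    have "cinner (adj T x) y = cinner x (T (g n))" unfolding y by (rule adj_char2[OF Tb])
    also have "\<dots> = 0"
    proof (cases "n = 0")
      case True
      have "x \<in> perp V" using NK2[OF x] perpV by simp
      then show ?thesis using Td_V True g0 by (auto dest: perpD)
    next
      case False
      then have "T (g n) = g (n + k)" using gshift by simp
      then show ?thesis using x unfolding N_def by (auto dest: perpD)
    qed
    finally show "cinner (adj T x) y = 0" .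
  qed
  have red: "reducing_subspace T N"
    unfolding reducing_subspace_def using Nsub TN AN by auto
  have un: "unitary_on T N"
    unfolding unitary_on_def
  proof (intro conjI ballI)
    fix x assume x: "x \<in> N"
    have "cinner (T x) (T x) = cinner x x" by (rule iso_K1[OF NK1[OF x]])
    then have "(norm (T x))^2 = (norm x)^2" by (simp add: norm_sq_cinner)
    then show "norm (T x) = norm x" by (simp add: power2_eq_iff_nonneg)
  next
    show "T ` N = N"
    proof
      show "T ` N \<subseteq> N" using TN by auto
      show "N \<subseteq> T ` N"
      proof
        fix x assume x: "x \<in> N"
        have "T (adj T x) = x" using NK2[OF x] by simp
        then show "x \<in> T ` N" using AN[OF x] by (metis image_eqI)
      qed
    qed
  qed
  have N0: "N = {0}"
    using cnu red un Nsub(1) unfolding completely_non_unitary_def csubspace_def by blast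
  define C where "C = closure (cspan (range g))"
  have Csub: "csubspace C" unfolding C_def cspan_eq
    by (rule csubspace_closure) (simp add: csubspace_iff)
  show "closure (cspan (range g)) = UNIV" unfolding C_def[symmetric]
  proof (rule perp_trivial_UNIV[OF Csub])
    show "closed C" unfolding C_def by simp
    fix x assume "x \<in> perp C"
    then have "x \<in> N" unfolding C_def N_def by (simp add: perp_closure cspan_eq perp_span)
    then show "x = 0" using N0 by simp
  qed
qed

lemma Td_exp: "T d = (\<Sum>i\<le>k. scaleC (cinner (T d) (g i)) (g i))"
proof -
  have on: "\<And>m n. cinner (g m) (g n) = (if m = n then 1 else 0)" by (rule g_on)
  have VQ: "perp {x. \<forall>i\<in>{..k}. cinner x (g i) = 0} = V"
    using perp_Q[OF on, of "{..k}"] V_g by simp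
  define z where "z = T d - Pr g {..k} (T d)"
  have zQ: "z \<in> {x. \<forall>i\<in>{..k}. cinner x (g i) = 0}"
    unfolding z_def by (simp add: cinner_diff_left cinner_Pr[OF on])
  have "Pr g {..k} (T d) \<in> V" using Pr_span V_g by metis
  then have "z \<in> V" unfolding z_def by (rule cvs.subspace_diff[OF V_sub Td_V])
  then have "z \<in> perp {x. \<forall>i\<in>{..k}. cinner x (g i) = 0}" using VQ by simp
  then have "cinner z z = 0" using zQ by (rule perpD)
  then have "T d = Pr g {..k} (T d)" unfolding z_def by simp
  then show ?thesis unfolding Pr_def .
qed

lemma Td_norm: "(\<Sum>i\<le>k. (cmod (cinner (T d) (g i)))^2) < 1"
proof -
  have on: "\<And>m n. cinner (g m) (g n) = (if m = n then 1 else 0)" by (rule g_on)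
  have eq: "(norm (T d))^2 = (\<Sum>i\<le>k. (cmod (cinner (T d) (g i)))^2)"
    by (subst Td_exp) (rule norm_sum_on[OF on], simp)
  have le: "norm (T d) \<le> 1" using Tc nd unfolding contraction_def by metis
  have "norm (T d) \<noteq> 1"
  proof
    assume "norm (T d) = 1"
    then have "adj T (T d) = d" using isometric_point[OF Tc] nd by simp
    then have "d \<in> K1" by simp
    then show False using K1d dd by simp
  qed
  then have "norm (T d) < 1" using le by simp
  then have "(norm (T d))^2 < 1" by (simp add: power_less_one_iff abs_less_iff)
  then show ?thesis using eq by simp
qed

lemma forward_f:
  "\<exists>e \<alpha>. orthonormal_basis_nat e \<and> (\<Sum>i\<le>k. (cmod (\<alpha> i))\<^sup>2) < 1
     \<and> (\<forall>n. T (e n) = e (n + k)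
          + (if n = 0 then (\<Sum>i<k. scaleC (\<alpha> i) (e i)) + scaleC (\<alpha> k - 1) (e k) else 0))"
proof (intro exI conjI allI)
  show "orthonormal_basis_nat g" by (rule g_onb)
  show "(\<Sum>i\<le>k. (cmod (cinner (T d) (g i)))\<^sup>2) < 1" by (rule Td_norm)
  fix n
  show "T (g n) = g (n + k) + (if n = 0 then (\<Sum>i<k. scaleC (cinner (T d) (g i)) (g i))
          + scaleC (cinner (T d) (g k) - 1) (g k) else 0)"
  proof (cases "n = 0")
    case True
    have "g (0 + k) + ((\<Sum>i<k. scaleC (cinner (T d) (g i)) (g i)) + scaleC (cinner (T d) (g k) - 1) (g k))
        = (\<Sum>i<k. scaleC (cinner (T d) (g i)) (g i)) + scaleC (cinner (T d) (g k)) (g k)"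
      by (simp add: scaleC_diff_left scaleC_one)
    also have "\<dots> = (\<Sum>i\<le>k. scaleC (cinner (T d) (g i)) (g i))"
      by (simp add: lessThan_Suc_atMost[symmetric])
    also have "\<dots> = T d" by (rule Td_exp[symmetric])
    finally show ?thesis using True g0 by simp
  next
    case False
    then show ?thesis using gshift[of n] by simp
  qed
qed

end

lemma forward_d:
  "\<exists>e \<alpha>. orthonormal_basis_nat e \<and> (\<Sum>i\<le>k. (cmod (\<alpha> i))\<^sup>2) < 1
     \<and> (\<forall>n. T (e n) = e (n + k)
          + (if n = 0 then (\<Sum>i<k. scaleC (\<alpha> i) (e i)) + scaleC (\<alpha> k - 1) (e k) else 0))"
proof -
  obtain f where "\<forall>i<k. \<forall>j<k. cinner (f i) (f j) = (if i = j then 1 else 0)" "cvs.span (f ` {..<k}) = U"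
    using exists_f by blast
  then show ?thesis by (rule forward_f)
qed

end

lemma forward:
  "\<exists>e \<alpha>. orthonormal_basis_nat e \<and> (\<Sum>i\<le>k. (cmod (\<alpha> i))\<^sup>2) < 1
     \<and> (\<forall>n. T (e n) = e (n + k)
          + (if n = 0 then (\<Sum>i<k. scaleC (\<alpha> i) (e i)) + scaleC (\<alpha> k - 1) (e k) else 0))"
proof -
  obtain d where "norm d = 1" "d \<in> V" "\<forall>x. x \<in> K1 \<longleftrightarrow> cinner x d = 0"
    using exists_d by blast
  then show ?thesis using forward_d by blast
qed


end

theorem theorem3p6:
  fixes T :: "'h::chilbert \<Rightarrow> 'h" and k :: nat
  assumes "separable_hilbert TYPE('h)"
    and "infinite_dimensional TYPE('h)"
    and "bounded_op T"
    and "k \<ge> 1"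
  shows "(contraction T \<and> completely_non_unitary T
          \<and> defect_space T \<subseteq> defect_space_adj T
          \<and> has_cdim (defect_space T) 1 \<and> has_cdim (defect_space_adj T) (k + 1))
     \<longleftrightarrow>
     (\<exists>e \<alpha>. orthonormal_basis_nat e
        \<and> (\<Sum>i\<le>k. (cmod (\<alpha> i))\<^sup>2) < 1
        \<and> (\<forall>n. T (e n) = e (n + k)
                 + (if n = 0 then (\<Sum>i<k. scaleC (\<alpha> i) (e i)) + scaleC (\<alpha> k - 1) (e k) else 0)))"
proof
  assume L: "contraction T \<and> completely_non_unitary T
          \<and> defect_space T \<subseteq> defect_space_adj T
          \<and> has_cdim (defect_space T) 1 \<and> has_cdim (defect_space_adj T) (k + 1)"
  show "\<exists>e \<alpha>. orthonormal_basis_nat e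
        \<and> (\<Sum>i\<le>k. (cmod (\<alpha> i))\<^sup>2) < 1
        \<and> (\<forall>n. T (e n) = e (n + k)
                 + (if n = 0 then (\<Sum>i<k. scaleC (\<alpha> i) (e i)) + scaleC (\<alpha> k - 1) (e k) else 0))"
    using forward[OF assms(4)] L by blast
next
  assume "\<exists>e \<alpha>. orthonormal_basis_nat e
        \<and> (\<Sum>i\<le>k. (cmod (\<alpha> i))\<^sup>2) < 1
        \<and> (\<forall>n. T (e n) = e (n + k)
                 + (if n = 0 then (\<Sum>i<k. scaleC (\<alpha> i) (e i)) + scaleC (\<alpha> k - 1) (e k) else 0))"
  then obtain e \<alpha> where onb: "orthonormal_basis_nat e" and as: "(\<Sum>i\<le>k. (cmod (\<alpha> i))\<^sup>2) < 1"
    and Te: "\<forall>n. T (e n) = e (n + k)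
                 + (if n = 0 then (\<Sum>i<k. scaleC (\<alpha> i) (e i)) + scaleC (\<alpha> k - 1) (e k) else 0)"
    by blast
  show "contraction T \<and> completely_non_unitary T
          \<and> defect_space T \<subseteq> defect_space_adj T
          \<and> has_cdim (defect_space T) 1 \<and> has_cdim (defect_space_adj T) (k + 1)"
    by (rule backward_main[OF assms(3) assms(4) onb as Te])
qed

end
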